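(* Let $p_0$ be a real smooth function on $T^*\mathbb{R}^n\simeq\mathbb{R}^{2n}$ whose critical point is $z_0=0$, with $p_0(z)=E_c+\sum_{j=k}^N\mathfrak{p}_j(z)+\mathcal{O}(\|z\|^{N+1})$ near $0$, where $k>2$ and each $\mathfrak{p}_j$ is homogeneous of degree $j$. Let $\Phi_t$ be the Hamiltonian flow of $p_0$, and let $S(t,x,\xi)$ be a smooth local generating function of the flow near $(x,\xi)=0$, i.e. $\Phi_t(\partial_\xi S(t,x,\xi),\xi)=(x,\partial_xS(t,x,\xi))$, satisfying the Hamilton–Jacobi equation $\partial_tS(t,x,\xi)+p_0(x,\partial_xS(t,x,\xi))=0$ with $S(0,x,\xi)=\langle x,\xi\rangle$. Then near the origin $$S(t,x,\xi)-\langle x,\xi\rangle+tE_c=-t\big(\mathfrak{p}_k(x,\xi)+R_{k+1}(x,\xi)+tG_{k+1}(t,x,\xi)\big),$$ where $R_{k+1}(x,\xi)=\mathcal{O}(\|(x,\xi)\|^{k+1})$ and $G_{k+1}(t,x,\xi)=\mathcal{O}(\|(x,\xi)\|^{k+1})$, uniformly for $t$ in a compact subset of $\mathbb{R}$.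
   Context: $z=(x,\xi)$ denotes a point of phase space; the Hamiltonian vector field is $H_{p_0}=\partial_\xi p_0\cdot\partial_x-\partial_xp_0\cdot\partial_\xi$ and $\Phi_t=\exp(tH_{p_0})$. The paper takes the critical point to be at the origin as a standing normalization. *)

theory Defs
  imports "HOL-Analysis.Analysis"
begin

definition dir_deriv :: "'a::real_normed_vector \<Rightarrow> ('a \<Rightarrow> real) \<Rightarrow> 'a \<Rightarrow> real" where
  "dir_deriv v f x = deriv (\<lambda>s. f (x + s *\<^sub>R v)) 0"

fun iter_pd :: "'a list \<Rightarrow> ('a::real_normed_vector \<Rightarrow> real) \<Rightarrow> 'a \<Rightarrow> real" where
  "iter_pd [] f = f"
| "iter_pd (v # vs) f = dir_deriv v (iter_pd vs f)"

definition smooth_on :: "'a::euclidean_space set \<Rightarrow> ('a \<Rightarrow> real) \<Rightarrow> bool" where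
  "smooth_on U f \<longleftrightarrow>
     (\<forall>vs. set vs \<subseteq> Basis \<longrightarrow>
        continuous_on U (iter_pd vs f) \<and>
        (\<forall>v\<in>Basis. \<forall>x\<in>U. (\<lambda>s. iter_pd vs f (x + s *\<^sub>R v)) differentiable (at 0)))"

definition pgrad :: "(real^'n \<Rightarrow> real) \<Rightarrow> real^'n \<Rightarrow> real^'n" where
  "pgrad f x = (\<chi> i. frechet_derivative f (at x) (axis i 1))"

definition homogeneous_deg :: "nat \<Rightarrow> ('a::real_vector \<Rightarrow> real) \<Rightarrow> bool" where
  "homogeneous_deg j P \<longleftrightarrow> (\<forall>c z. P (c *\<^sub>R z) = c ^ j * P z)"

definition ham_field :: "(real^'n \<Rightarrow> real^'n \<Rightarrow> real) \<Rightarrow> (real^'n) \<times> (real^'n) \<Rightarrow> (real^'n) \<times> (real^'n)" where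
  "ham_field p z = (pgrad (\<lambda>\<xi>. p (fst z) \<xi>) (snd z), - pgrad (\<lambda>x. p x (snd z)) (fst z))"

definition is_ham_flow ::
  "(real^'n \<Rightarrow> real^'n \<Rightarrow> real) \<Rightarrow> (real \<times> ((real^'n) \<times> (real^'n))) set
     \<Rightarrow> (real \<Rightarrow> (real^'n) \<times> (real^'n) \<Rightarrow> (real^'n) \<times> (real^'n)) \<Rightarrow> bool" where
  "is_ham_flow p \<Omega> \<Phi> \<longleftrightarrow> open \<Omega> \<and>
     (\<forall>z. (0, z) \<in> \<Omega> \<and> \<Phi> 0 z = z \<and> is_interval {t. (t, z) \<in> \<Omega>}) \<and>
     (\<forall>t z. (t, z) \<in> \<Omega> \<longrightarrow> ((\<lambda>s. \<Phi> s z) has_vector_derivative ham_field p (\<Phi> t z)) (at t))"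

end

theory Submission
  imports Defs
begin

lemma iter_pd_append: "iter_pd (ws @ vs) f = iter_pd ws (iter_pd vs f)"
  by (induction ws) auto

lemma DERIV_shift0:
  fixes g :: "real \<Rightarrow> real"
  assumes "(g has_real_derivative D) (at 0)"
  shows "((\<lambda>s. g (s - s0)) has_real_derivative D) (at s0)"
  using DERIV_shift[of g D s0 "-s0"] assms by simp

lemma smooth_on_cont:
  assumes "smooth_on U f" "set vs \<subseteq> Basis"
  shows "continuous_on U (iter_pd vs f)"
  using assms unfolding smooth_on_def by blast

lemma smooth_on_deriv1:
  assumes sm: "smooth_on U f" and vs: "set vs \<subseteq> Basis" and b: "b \<in> Basis"
    and pU: "p + s0 *\<^sub>R b \<in> U"
  shows "((\<lambda>s. iter_pd vs f (p + s *\<^sub>R b)) has_real_derivative iter_pd (b # vs) f (p + s0 *\<^sub>R b)) (at s0)"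
proof -
  let ?x = "p + s0 *\<^sub>R b"
  let ?g = "\<lambda>s. iter_pd vs f (?x + s *\<^sub>R b)"
  have "?g differentiable (at 0)"
    using sm vs b pU unfolding smooth_on_def by blast
  then have "(?g has_real_derivative deriv ?g 0) (at 0)"
    using DERIV_deriv_iff_real_differentiable by blast
  moreover have "deriv ?g 0 = iter_pd (b # vs) f ?x"
    by (simp add: dir_deriv_def)
  ultimately have "(?g has_real_derivative iter_pd (b # vs) f ?x) (at 0)" by simp
  then have "((\<lambda>s. ?g (s - s0)) has_real_derivative iter_pd (b # vs) f ?x) (at s0)"
    by (rule DERIV_shift0)
  moreover have "(\<lambda>s. ?g (s - s0)) = (\<lambda>s. iter_pd vs f (p + s *\<^sub>R b))"
    by (rule ext) (simp add: algebra_simps)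
  ultimately show ?thesis by simp
qed

lemma norm_partial_sum_le:
  fixes h :: "'a::euclidean_space"
  assumes "I \<subseteq> Basis"
  shows "norm (\<Sum>b\<in>I. (h \<bullet> b) *\<^sub>R b) \<le> real (card I) * norm h"
proof -
  have fin: "finite I" using assms finite_Basis finite_subset by blast
  have "norm (\<Sum>b\<in>I. (h \<bullet> b) *\<^sub>R b) \<le> (\<Sum>b\<in>I. norm ((h \<bullet> b) *\<^sub>R b))"
    by (rule norm_sum)
  also have "\<dots> \<le> (\<Sum>b\<in>I. norm h)"
    apply (rule sum_mono)
    using assms Basis_le_norm by (auto simp: norm_Basis subset_iff)
  finally show ?thesis by simp
qed

lemma partials_has_derivative:
  fixes g :: "'a::euclidean_space \<Rightarrow> real"
  assumes U: "open U" "x \<in> U"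
    and der: "\<And>b y. b \<in> Basis \<Longrightarrow> y \<in> U \<Longrightarrow> ((\<lambda>s. g (y + s *\<^sub>R b)) has_real_derivative D b y) (at 0)"
    and cont: "\<And>b. b \<in> Basis \<Longrightarrow> continuous_on U (D b)"
  shows "(g has_derivative (\<lambda>h. \<Sum>b\<in>Basis. (h \<bullet> b) * D b x)) (at x)"
  unfolding has_derivative_at_alt
proof (intro conjI allI impI)
  show "bounded_linear (\<lambda>h. \<Sum>b\<in>Basis. (h \<bullet> b) * D b x)"
    by (intro bounded_linear_sum bounded_linear_compose[OF bounded_linear_mult_left bounded_linear_inner_left])
next
  fix e :: real assume e: "e > 0"
  define n where "n = real DIM('a)"
  have n: "n \<ge> 1" unfolding n_def using DIM_positive by (simp add: Suc_le_eq)
  define e' where "e' = e / n"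
  have e': "e' > 0" unfolding e'_def using e n by simp
  have ev: "\<forall>\<^sub>F y in at x. y \<in> U \<and> (\<forall>b\<in>Basis. \<bar>D b y - D b x\<bar> < e')"
  proof (intro eventually_conj eventually_ball_finite ballI finite_Basis)
    show "\<forall>\<^sub>F y in at x. y \<in> U" using U eventually_at_topological by blast
  next
    fix b :: 'a assume b: "b \<in> Basis"
    have "continuous (at x) (D b)"
      using cont[OF b] U continuous_on_eq_continuous_at by blast
    then have "((D b) \<longlongrightarrow> D b x) (at x)"
      by (simp add: continuous_at)
    from tendstoD[OF this e'] show "\<forall>\<^sub>F y in at x. \<bar>D b y - D b x\<bar> < e'"
      by (simp add: dist_real_def)
  qed
  then obtain \<delta> where \<delta>: "\<delta> > 0"
    and \<delta>P: "\<And>y. y \<noteq> x \<Longrightarrow> dist y x < \<delta> \<Longrightarrow> y \<in> U \<and> (\<forall>b\<in>Basis. \<bar>D b y - D b x\<bar> < e')"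
    unfolding eventually_at by blast
  have P: "y \<in> U \<and> (\<forall>b\<in>Basis. \<bar>D b y - D b x\<bar> \<le> e')" if "dist y x < \<delta>" for y
    using \<delta>P[of y] that U e' by (cases "y = x") (auto simp: less_imp_le)
  define d where "d = \<delta> / n"
  have d: "d > 0" unfolding d_def using \<delta> n by simp
  have claim: "\<bar>g (x + (\<Sum>b\<in>I. (h \<bullet> b) *\<^sub>R b)) - g x - (\<Sum>b\<in>I. (h \<bullet> b) * D b x)\<bar> \<le> real (card I) * e' * norm h"
    if I: "I \<subseteq> Basis" and h: "norm h < d" for I h
  proof -
    have "finite I" using I finite_Basis finite_subset by blast
    then show ?thesis using I
    proof (induction I rule: finite_induct)
      case empty
      then show ?case by simp
    next
      case (insert b0 I)
      have b0: "b0 \<in> Basis" and IB: "I \<subseteq> Basis" using insert by auto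
      have cardI: "real (card I) + 1 \<le> n"
      proof -
        have "card (insert b0 I) \<le> card (Basis :: 'a set)"
          using insert.prems by (simp add: card_mono)
        then show ?thesis using insert by (simp add: n_def)
      qed
      define p where "p = x + (\<Sum>b\<in>I. (h \<bullet> b) *\<^sub>R b)"
      define c where "c = h \<bullet> b0"
      have c: "\<bar>c\<bar> \<le> norm h" unfolding c_def using Basis_le_norm b0 by blast
      have inS: "dist (p + s *\<^sub>R b0) x < \<delta>" if "s \<in> closed_segment 0 c" for s
      proof -
        have s: "\<bar>s\<bar> \<le> \<bar>c\<bar>" using that
          by (auto simp: closed_segment_eq_real_ivl split: if_splits)
        have "dist (p + s *\<^sub>R b0) x = norm ((\<Sum>b\<in>I. (h \<bullet> b) *\<^sub>R b) + s *\<^sub>R b0)"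
          by (simp add: p_def dist_norm)
        also have "\<dots> \<le> norm (\<Sum>b\<in>I. (h \<bullet> b) *\<^sub>R b) + norm (s *\<^sub>R b0)"
          by (rule norm_triangle_ineq)
        also have "\<dots> \<le> real (card I) * norm h + norm h"
          using norm_partial_sum_le[OF IB, of h] s c b0 by simp
        also have "\<dots> = (real (card I) + 1) * norm h" by (simp add: algebra_simps)
        also have "\<dots> \<le> n * norm h" using cardI by (simp add: mult_right_mono)
        also have "\<dots> < n * d" using h n by simp
        also have "\<dots> = \<delta>" using n by (simp add: d_def)
        finally show ?thesis .
      qed
      define F where "F = (\<lambda>s. g (p + s *\<^sub>R b0) - s * D b0 x)"
      have stepF: "norm (F c - F 0) \<le> e' * norm (c - 0)"
      proof (rule field_differentiable_bound[of "closed_segment 0 c"])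
        fix s assume s: "s \<in> closed_segment 0 c"
        have y: "p + s *\<^sub>R b0 \<in> U" using P[OF inS[OF s]] by blast
        have "((\<lambda>t. g ((p + s *\<^sub>R b0) + t *\<^sub>R b0)) has_real_derivative D b0 (p + s *\<^sub>R b0)) (at 0)"
          using der[OF b0 y] .
        then have "((\<lambda>t. g ((p + s *\<^sub>R b0) + (t - s) *\<^sub>R b0)) has_real_derivative D b0 (p + s *\<^sub>R b0)) (at s)"
          by (rule DERIV_shift0)
        moreover have "(\<lambda>t. g ((p + s *\<^sub>R b0) + (t - s) *\<^sub>R b0)) = (\<lambda>t. g (p + t *\<^sub>R b0))"
          by (rule ext) (simp add: algebra_simps)
        ultimately have "((\<lambda>t. g (p + t *\<^sub>R b0)) has_real_derivative D b0 (p + s *\<^sub>R b0)) (at s)"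
          by simp
        then show "(F has_real_derivative
             (D b0 (p + s *\<^sub>R b0) - D b0 x)) (at s within closed_segment 0 c)"
        proof -
          have "((\<lambda>t. t * D b0 x) has_real_derivative 1 * D b0 x) (at s)"
            by (rule DERIV_cmult_right[OF DERIV_ident])
          then have "(F has_real_derivative (D b0 (p + s *\<^sub>R b0) - 1 * D b0 x)) (at s)"
            unfolding F_def by (rule DERIV_diff[OF \<open>((\<lambda>t. g (p + t *\<^sub>R b0)) has_real_derivative D b0 (p + s *\<^sub>R b0)) (at s)\<close>])
          then show ?thesis by (simp add: has_field_derivative_at_within)
        qed
        show "norm (D b0 (p + s *\<^sub>R b0) - D b0 x) \<le> e'"
          using P[OF inS[OF s]] b0 by simp
      qed (auto)
      have step: "\<bar>g (p + c *\<^sub>R b0) - c * D b0 x - g p\<bar> \<le> e' * \<bar>c\<bar>"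
        using stepF by (simp add: F_def)
      have eq1: "x + (\<Sum>b\<in>insert b0 I. (h \<bullet> b) *\<^sub>R b) = p + c *\<^sub>R b0"
        using insert by (simp add: p_def c_def algebra_simps)
      have eq2: "(\<Sum>b\<in>insert b0 I. (h \<bullet> b) * D b x) = c * D b0 x + (\<Sum>b\<in>I. (h \<bullet> b) * D b x)"
        using insert by (simp add: c_def)
      have IH: "\<bar>g p - g x - (\<Sum>b\<in>I. (h \<bullet> b) * D b x)\<bar> \<le> real (card I) * e' * norm h"
        using insert IB by (simp add: p_def)
      have "\<bar>g (x + (\<Sum>b\<in>insert b0 I. (h \<bullet> b) *\<^sub>R b)) - g x - (\<Sum>b\<in>insert b0 I. (h \<bullet> b) * D b x)\<bar>
          \<le> \<bar>g (p + c *\<^sub>R b0) - c * D b0 x - g p\<bar> + \<bar>g p - g x - (\<Sum>b\<in>I. (h \<bullet> b) * D b x)\<bar>"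
        unfolding eq1 eq2 by linarith
      also have "\<dots> \<le> e' * norm h + real (card I) * e' * norm h"
      proof -
        have "e' * \<bar>c\<bar> \<le> e' * norm h" using c e' by (simp add: mult_left_mono)
        then show ?thesis using step IH by linarith
      qed
      also have "\<dots> = real (card (insert b0 I)) * e' * norm h"
        using insert by (simp add: algebra_simps)
      finally show ?case .
    qed
  qed
  show "\<exists>d>0. \<forall>y. norm (y - x) < d \<longrightarrow>
      norm (g y - g x - (\<Sum>b\<in>Basis. ((y - x) \<bullet> b) * D b x)) \<le> e * norm (y - x)"
  proof (intro exI[of _ d] conjI allI impI d)
    fix y assume y: "norm (y - x) < d"
    have "\<bar>g (x + (\<Sum>b\<in>Basis. ((y - x) \<bullet> b) *\<^sub>R b)) - g x - (\<Sum>b\<in>Basis. ((y - x) \<bullet> b) * D b x)\<bar>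
        \<le> real (card (Basis::'a set)) * e' * norm (y - x)"
      using claim[OF order_refl y] .
    moreover have "x + (\<Sum>b\<in>Basis. ((y - x) \<bullet> b) *\<^sub>R b) = y"
      by (simp add: euclidean_representation)
    moreover have "real (card (Basis::'a set)) * e' = e"
      using n by (simp add: e'_def n_def)
    ultimately show "norm (g y - g x - (\<Sum>b\<in>Basis. ((y - x) \<bullet> b) * D b x)) \<le> e * norm (y - x)"
      by simp
  qed
qed

lemma smooth_on_has_derivative:
  fixes f :: "'a::euclidean_space \<Rightarrow> real"
  assumes sm: "smooth_on U f" and U: "open U" "x \<in> U" and vs: "set vs \<subseteq> Basis"
  shows "(iter_pd vs f has_derivative (\<lambda>h. \<Sum>b\<in>Basis. (h \<bullet> b) * iter_pd (b # vs) f x)) (at x)"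
proof (rule partials_has_derivative[OF U])
  fix b y :: 'a assume b: "b \<in> Basis" and y: "y \<in> U"
  show "((\<lambda>s. iter_pd vs f (y + s *\<^sub>R b)) has_real_derivative iter_pd (b # vs) f y) (at 0)"
    using smooth_on_deriv1[OF sm vs b, of y 0] y by simp
next
  fix b :: 'a assume b: "b \<in> Basis"
  show "continuous_on U (iter_pd (b # vs) f)"
    using smooth_on_cont[OF sm, of "b # vs"] vs b by simp
qed

lemma abs_diff_scaled_le:
  fixes X Y k :: real
  assumes "k \<ge> 0"
  shows "\<bar>X - k * Y\<bar> \<le> \<bar>X\<bar> + k * \<bar>Y\<bar>"
proof -
  have "\<bar>X - k * Y\<bar> \<le> \<bar>X\<bar> + \<bar>k * Y\<bar>" by (rule abs_triangle_ineq4)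
  then show ?thesis using assms by (simp add: abs_mult)
qed

lemma coeff_bound:
  "\<exists>B>0. \<forall>(c::nat\<Rightarrow>real) M. (\<forall>i\<le>d. \<bar>\<Sum>m\<le>d. c m * (1/2^i)^m\<bar> \<le> M) \<longrightarrow> (\<forall>j\<le>d. \<bar>c j\<bar> \<le> B * M)"
proof (induction d)
  case 0
  show ?case by (intro exI[of _ 1]) auto
next
  case (Suc d)
  then obtain B where B: "B > 0"
    and IH: "\<And>(c::nat\<Rightarrow>real) M. (\<forall>i\<le>d. \<bar>\<Sum>m\<le>d. c m * (1/2^i)^m\<bar> \<le> M) \<Longrightarrow> (\<forall>j\<le>d. \<bar>c j\<bar> \<le> B * M)"
    by blast
  define A where "A = B * (1 + 2^Suc d)"
  have A: "A > 0" using B by (simp add: A_def add_pos_pos)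
  show ?case
  proof (intro exI[of _ "1 + real (Suc d) * A"] conjI allI impI)
    show "0 < 1 + real (Suc d) * A" using A by (simp add: add_pos_nonneg)
  next
    fix c :: "nat \<Rightarrow> real" and M j
    assume H: "\<forall>i\<le>Suc d. \<bar>\<Sum>m\<le>Suc d. c m * (1/2^i)^m\<bar> \<le> M"
      and j: "j \<le> Suc d"
    have M0: "M \<ge> 0" using H[rule_format, of 0] by linarith
    define c' where "c' m = c m * (1 - 2^Suc d / 2^m)" for m
    have key: "(\<Sum>m\<le>d. c' m * (1/2^i)^m) =
          (\<Sum>m\<le>Suc d. c m * (1/2^i)^m) - 2^Suc d * (\<Sum>m\<le>Suc d. c m * (1/2^(Suc i))^m)" for i
    proof -
      have "(\<Sum>m\<le>Suc d. c m * (1/2^i)^m) - 2^Suc d * (\<Sum>m\<le>Suc d. c m * (1/2^(Suc i))^m)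
          = (\<Sum>m\<le>Suc d. c m * (1/2^i)^m - 2^Suc d * (c m * (1/2^(Suc i))^m))"
        by (simp only: sum_subtractf sum_distrib_left)
      also have "\<dots> = (\<Sum>m\<le>Suc d. c' m * (1/2^i)^m)"
        by (rule sum.cong) (auto simp: c'_def power_divide power_mult_distrib field_simps power_add[symmetric])
      also have "\<dots> = (\<Sum>m\<le>d. c' m * (1/2^i)^m)"
        by (simp add: c'_def)
      finally show ?thesis by simp
    qed
    have "\<forall>i\<le>d. \<bar>\<Sum>m\<le>d. c' m * (1/2^i)^m\<bar> \<le> (1 + 2^Suc d) * M"
    proof (intro allI impI)
      fix i assume i: "i \<le> d"
      have h1: "\<bar>\<Sum>m\<le>Suc d. c m * (1/2^i)^m\<bar> \<le> M" using H i by simp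
      have h2: "\<bar>\<Sum>m\<le>Suc d. c m * (1/2^(Suc i))^m\<bar> \<le> M" using H[rule_format, of "Suc i"] i by (simp del: power_Suc sum.atMost_Suc)
      have "\<bar>\<Sum>m\<le>d. c' m * (1/2^i)^m\<bar> \<le> \<bar>\<Sum>m\<le>Suc d. c m * (1/2^i)^m\<bar>
           + 2^Suc d * \<bar>\<Sum>m\<le>Suc d. c m * (1/2^(Suc i))^m\<bar>"
        unfolding key by (rule abs_diff_scaled_le) simp
      also have "\<dots> \<le> M + 2^Suc d * M"
        using h1 h2 by (intro add_mono mult_left_mono) auto
      finally show "\<bar>\<Sum>m\<le>d. c' m * (1/2^i)^m\<bar> \<le> (1 + 2^Suc d) * M"
        by (simp add: algebra_simps)
    qed
    from IH[OF this] have c'b: "\<forall>j\<le>d. \<bar>c' j\<bar> \<le> A * M" by (simp add: A_def mult.assoc)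
    have cb: "\<bar>c m\<bar> \<le> A * M" if m: "m \<le> d" for m
    proof -
      have "(2::real)^m * 2 \<le> 2^Suc d" using m
        by (metis power_Suc power_increasing_iff mult.commute one_less_numeral_iff semiring_norm(76) Suc_le_mono)
      then have "2 \<le> (2::real)^Suc d / 2^m" by (simp add: field_simps)
      then have f: "\<bar>1 - (2::real)^Suc d / 2^m\<bar> \<ge> 1" by linarith
      have "\<bar>c m\<bar> \<le> \<bar>c m\<bar> * \<bar>1 - (2::real)^Suc d / 2^m\<bar>"
        using f by (simp add: mult_le_cancel_left1)
      also have "\<dots> = \<bar>c' m\<bar>" by (simp add: c'_def abs_mult)
      also have "\<dots> \<le> A * M" using c'b m by simp
      finally show ?thesis .
    qed
    show "\<bar>c j\<bar> \<le> (1 + real (Suc d) * A) * M"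
    proof (cases "j \<le> d")
      case True
      then have "\<bar>c j\<bar> \<le> A * M" by (rule cb)
      also have "\<dots> \<le> (1 + real (Suc d) * A) * M"
        using A M0 by (intro mult_right_mono) (auto simp: algebra_simps intro: order_trans[of _ "1 * A"])
      finally show ?thesis .
    next
      case False
      then have jd: "j = Suc d" using j by simp
      have p1: "\<bar>\<Sum>m\<le>Suc d. c m\<bar> \<le> M" using H[rule_format, of 0] by simp
      have "c (Suc d) = (\<Sum>m\<le>Suc d. c m) - (\<Sum>m\<le>d. c m)" by simp
      then have "\<bar>c (Suc d)\<bar> \<le> \<bar>\<Sum>m\<le>Suc d. c m\<bar> + \<bar>\<Sum>m\<le>d. c m\<bar>" by linarith
      also have "\<bar>\<Sum>m\<le>d. c m\<bar> \<le> (\<Sum>m\<le>d. \<bar>c m\<bar>)" by (rule sum_abs)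
      also have "\<dots> \<le> (\<Sum>m\<le>d. A * M)" by (rule sum_mono) (simp add: cb)
      also have "\<dots> = real (Suc d) * A * M" by simp
      finally show ?thesis using p1 jd by (simp add: algebra_simps)
    qed
  qed
qed

lemma cont_bound_cball:
  fixes f :: "'a::euclidean_space \<Rightarrow> real"
  assumes "continuous_on S f" "cball 0 R \<subseteq> S"
  shows "\<exists>M. \<forall>v. norm v \<le> R \<longrightarrow> \<bar>f v\<bar> \<le> M"
proof -
  have "compact (f ` cball 0 R)"
    using assms by (intro compact_continuous_image continuous_on_subset[OF assms(1)]) auto
  then have "bounded (f ` cball 0 R)" by (rule compact_imp_bounded)
  then obtain M where "\<forall>y\<in>f ` cball 0 R. norm y \<le> M" unfolding bounded_iff by blast
  then show ?thesis by (intro exI[of _ M]) auto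
qed

lemma pp_bound:
  fixes P :: "'a::euclidean_space \<Rightarrow> real" and pp :: "nat \<Rightarrow> 'a \<Rightarrow> real"
  assumes sm: "smooth_on UNIV P"
    and k: "k \<ge> 1"
    and hom: "\<forall>j\<in>{k..N}. homogeneous_deg j (pp j)"
    and r: "r > 0" and expn: "\<forall>z. norm z < r \<longrightarrow> \<bar>P z - Ec - (\<Sum>j=k..N. pp j z)\<bar> \<le> C * norm z ^ (N + 1)"
  shows "\<exists>\<rho>>0. \<rho> \<le> 1 \<and> \<rho> < r \<and> (\<exists>Bp\<ge>0. \<forall>j\<in>{k..N}. \<forall>w. norm w \<le> \<rho> \<longrightarrow> \<bar>pp j w\<bar> \<le> Bp * norm w ^ j)"
proof -
  define \<rho> where "\<rho> = min 1 (r / 2)"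
  have \<rho>: "\<rho> > 0" "\<rho> \<le> 1" "\<rho> < r" using r by (auto simp: \<rho>_def)
  have "continuous_on UNIV P" using smooth_on_cont[OF sm, of "[]"] by simp
  then obtain MP where MP: "\<And>v. norm v \<le> 1 \<Longrightarrow> \<bar>P v\<bar> \<le> MP"
    using cont_bound_cball[of UNIV P 1] by auto
  define M where "M = MP + \<bar>Ec\<bar> + \<bar>C\<bar>"
  obtain B where B: "B > 0"
    and CB: "\<And>(c::nat\<Rightarrow>real) M. (\<forall>i\<le>N. \<bar>\<Sum>m\<le>N. c m * (1/2^i)^m\<bar> \<le> M) \<Longrightarrow> (\<forall>j\<le>N. \<bar>c j\<bar> \<le> B * M)"
    using coeff_bound[of N] by blast
  have hom': "pp j (s *\<^sub>R u) = s ^ j * pp j u" if "j \<in> {k..N}" for j s u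
    using hom that unfolding homogeneous_deg_def by blast
  have usph: "\<bar>pp j u\<bar> \<le> B * M" if u: "norm u = \<rho>" and j: "j \<in> {k..N}" for u j
  proof -
    define c where "c m = (if k \<le> m then pp m u else 0)" for m
    have "\<bar>\<Sum>m\<le>N. c m * (1/2^i)^m\<bar> \<le> M" if i: "i \<le> N" for i
    proof -
      define \<sigma> :: real where "\<sigma> = (1/2^i)"
      have \<sigma>: "0 < \<sigma>" "\<sigma> \<le> 1" by (auto simp: \<sigma>_def)
      have nzeq: "norm (\<sigma> *\<^sub>R u) = \<sigma> * \<rho>" using \<sigma> u by simp
      have "\<sigma> * \<rho> \<le> 1 * \<rho>" using \<sigma> \<rho> by (intro mult_right_mono) auto
      then have nzr: "norm (\<sigma> *\<^sub>R u) \<le> \<rho>" using nzeq by simp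
      have nz: "norm (\<sigma> *\<^sub>R u) \<le> 1" using nzr \<rho> by linarith
      have nz2: "norm (\<sigma> *\<^sub>R u) < r" using nzr \<rho> by linarith
      have "(\<Sum>m\<le>N. c m * \<sigma>^m) = (\<Sum>m\<in>{k..N}. pp m u * \<sigma>^m)"
      proof -
        have "(\<Sum>m\<le>N. c m * \<sigma>^m) = (\<Sum>m\<in>{..N}. if m \<in> {m. k \<le> m} then pp m u * \<sigma>^m else 0)"
          by (rule sum.cong) (auto simp: c_def)
        also have "\<dots> = (\<Sum>m\<in>{..N} \<inter> {m. k \<le> m}. pp m u * \<sigma>^m)"
          by (rule sum.inter_restrict[symmetric]) simp
        also have "{..N} \<inter> {m. k \<le> m} = {k..N}" by auto
        finally show ?thesis .
      qed
      also have "\<dots> = (\<Sum>m\<in>{k..N}. pp m (\<sigma> *\<^sub>R u))"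
        by (rule sum.cong) (auto simp: hom')
      finally have eq: "(\<Sum>m\<le>N. c m * \<sigma>^m) = (\<Sum>m=k..N. pp m (\<sigma> *\<^sub>R u))" .
      have e1: "\<bar>P (\<sigma> *\<^sub>R u) - Ec - (\<Sum>m=k..N. pp m (\<sigma> *\<^sub>R u))\<bar> \<le> C * norm (\<sigma> *\<^sub>R u) ^ (N + 1)"
        using expn nz2 by blast
      have "C * norm (\<sigma> *\<^sub>R u) ^ (N + 1) \<le> \<bar>C\<bar> * 1"
      proof (rule mult_mono)
        show "norm (\<sigma> *\<^sub>R u) ^ (N + 1) \<le> 1" using nz by (intro power_le_one) auto
      qed auto
      moreover have "\<bar>P (\<sigma> *\<^sub>R u)\<bar> \<le> MP" using MP nz by blast
      ultimately have "\<bar>\<Sum>m=k..N. pp m (\<sigma> *\<^sub>R u)\<bar> \<le> M" using e1 unfolding M_def by linarith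
      then show ?thesis using eq by (simp add: \<sigma>_def)
    qed
    then have "\<forall>j\<le>N. \<bar>c j\<bar> \<le> B * M" by (intro CB) blast
    then show ?thesis using j by (auto simp: c_def)
  qed
  have M0: "M \<ge> 0"
  proof -
    have "\<bar>P 0\<bar> \<le> MP" using MP by simp
    then show ?thesis unfolding M_def by linarith
  qed
  define Bp where "Bp = B * M / \<rho> ^ N"
  have Bp: "Bp \<ge> 0" using B M0 \<rho> by (simp add: Bp_def)
  have "\<forall>j\<in>{k..N}. \<forall>w. norm w \<le> \<rho> \<longrightarrow> \<bar>pp j w\<bar> \<le> Bp * norm w ^ j"
  proof (intro ballI allI impI)
    fix j and w :: 'a assume j: "j \<in> {k..N}" and w: "norm w \<le> \<rho>"
    show "\<bar>pp j w\<bar> \<le> Bp * norm w ^ j"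
    proof (cases "w = 0")
      case True
      have "pp j w = pp j (0 *\<^sub>R w)" using True by simp
      also have "\<dots> = 0 ^ j * pp j w" using hom' j by blast
      also have "\<dots> = 0" using j k by simp
      moreover have "(0::real) ^ j = 0" using j k by simp
      ultimately show ?thesis using True j k by (simp add: power_0_left)
    next
      case False
      define u where "u = (\<rho> / norm w) *\<^sub>R w"
      have nu: "norm u = \<rho>" using False \<rho> by (simp add: u_def)
      have wu: "w = (norm w / \<rho>) *\<^sub>R u" using False \<rho> by (simp add: u_def)
      have "pp j w = (norm w / \<rho>) ^ j * pp j u" using hom' j wu by metis
      then have "\<bar>pp j w\<bar> = (norm w / \<rho>) ^ j * \<bar>pp j u\<bar>" using \<rho> by (simp add: abs_mult)
      also have "\<dots> \<le> (norm w / \<rho>) ^ j * (B * M)" using usph[OF nu j] \<rho> by (intro mult_left_mono) auto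
      also have "\<dots> = norm w ^ j * (B * M) / \<rho> ^ j" by (simp add: power_divide)
      also have "\<dots> \<le> norm w ^ j * (B * M) / \<rho> ^ N"
      proof (rule divide_left_mono)
        show "\<rho> ^ N \<le> \<rho> ^ j" using \<rho> j by (intro power_decreasing) auto
      qed (use B M0 \<rho> in auto)
      also have "\<dots> = Bp * norm w ^ j" by (simp add: Bp_def)
      finally show ?thesis .
    qed
  qed
  then show ?thesis using \<rho> Bp by blast
qed

lemma partial_zero_at_crit:
  fixes P :: "'a::euclidean_space \<Rightarrow> real"
  assumes sm: "smooth_on UNIV P" and crit: "(P has_derivative (\<lambda>_. 0)) (at 0)" and b: "b \<in> Basis"
  shows "iter_pd [b] P 0 = 0"
proof -
  have d1: "((\<lambda>s. iter_pd [] P (0 + s *\<^sub>R b)) has_real_derivative iter_pd [b] P (0 + 0 *\<^sub>R b)) (at 0)"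
    by (rule smooth_on_deriv1[OF sm _ b]) auto
  have lin: "((\<lambda>s::real. s *\<^sub>R b) has_derivative (\<lambda>s. s *\<^sub>R b)) (at 0)"
    by (intro bounded_linear_imp_has_derivative bounded_linear_scaleR_left)
  have "((\<lambda>s. P (s *\<^sub>R b)) has_derivative (\<lambda>_. 0) \<circ> (\<lambda>s. s *\<^sub>R b)) (at 0)"
    using has_derivative_compose[OF lin] crit by simp
  then have "((\<lambda>s. P (s *\<^sub>R b)) has_real_derivative 0) (at 0)"
  proof -
    have "(*) (0::real) = (\<lambda>_. 0)" by auto
    then show ?thesis using \<open>((\<lambda>s. P (s *\<^sub>R b)) has_derivative (\<lambda>_. 0) \<circ> (\<lambda>s. s *\<^sub>R b)) (at 0)\<close>
      unfolding has_field_derivative_def by (simp add: o_def)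
  qed
  moreover have "((\<lambda>s. P (s *\<^sub>R b)) has_real_derivative iter_pd [b] P 0) (at 0)"
    using d1 by simp
  ultimately show ?thesis using DERIV_unique by blast
qed

lemma grad_from_order:
  fixes P :: "'a::euclidean_space \<Rightarrow> real"
  assumes sm: "smooth_on UNIV P" and crit: "(P has_derivative (\<lambda>_. 0)) (at 0)"
    and k: "k \<ge> 2" and \<rho>: "0 < \<rho>" "\<rho> \<le> 1"
    and Cq: "\<forall>v. norm v \<le> \<rho> \<longrightarrow> \<bar>P v - Ec\<bar> \<le> Cq * norm v ^ k"
  shows "\<exists>C\<ge>0. \<forall>w. norm w \<le> \<rho> / 2 \<longrightarrow> (\<forall>b\<in>Basis. \<bar>iter_pd [b] P w\<bar> \<le> C * norm w ^ (k - 1))"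
proof -
  have "\<forall>b\<in>Basis. \<exists>M. \<forall>v. norm v \<le> 1 \<longrightarrow> \<bar>iter_pd (replicate k b) P v\<bar> \<le> M"
  proof
    fix b :: 'a assume b: "b \<in> Basis"
    show "\<exists>M. \<forall>v. norm v \<le> 1 \<longrightarrow> \<bar>iter_pd (replicate k b) P v\<bar> \<le> M"
    proof (rule cont_bound_cball[of UNIV])
      have "set (replicate k b) \<subseteq> Basis" using b by (cases k) auto
      then show "continuous_on UNIV (iter_pd (replicate k b) P)" by (rule smooth_on_cont[OF sm])
    qed auto
  qed
  then obtain Mf where Mf: "\<And>b v. b \<in> Basis \<Longrightarrow> norm v \<le> 1 \<Longrightarrow> \<bar>iter_pd (replicate k b) P v\<bar> \<le> Mf b"
    by metis
  define Mk where "Mk = (\<Sum>b\<in>Basis. \<bar>Mf b\<bar>)"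
  have Mk: "\<bar>iter_pd (replicate k b) P v\<bar> \<le> Mk" if "b \<in> Basis" "norm v \<le> 1" for b v
  proof -
    have "Mf b \<le> \<bar>Mf b\<bar>" by simp
    also have "\<dots> \<le> Mk" unfolding Mk_def
      by (rule member_le_sum) (use that in auto)
    finally show ?thesis using Mf[OF that] by linarith
  qed
  have Mk0: "Mk \<ge> 0" unfolding Mk_def by (simp add: sum_nonneg)
  obtain B where B: "B > 0"
    and CB: "\<And>(c::nat\<Rightarrow>real) M. (\<forall>i\<le>k-1. \<bar>\<Sum>m\<le>k-1. c m * (1/2^i)^m\<bar> \<le> M) \<Longrightarrow> (\<forall>j\<le>k-1. \<bar>c j\<bar> \<le> B * M)"
    using coeff_bound[of "k-1"] by blast
  define C where "C = B * (\<bar>Cq\<bar> * 2^k + Mk)"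
  have C0: "C \<ge> 0" using B Mk0 by (simp add: C_def)
  show ?thesis
  proof (intro exI[of _ C] conjI C0 allI impI ballI)
    fix w :: 'a and b :: 'a assume w: "norm w \<le> \<rho> / 2" and b: "b \<in> Basis"
    show "\<bar>iter_pd [b] P w\<bar> \<le> C * norm w ^ (k - 1)"
    proof (cases "w = 0")
      case True
      then show ?thesis using partial_zero_at_crit[OF sm crit b] C0 k by (simp add: power_0_left)
    next
      case False
      define nw where "nw = norm w"
      have nw: "nw > 0" "2 * nw \<le> \<rho>" using False w by (auto simp: nw_def)
      define diff where "diff m s = (if m = 0 then P (w + s *\<^sub>R b) - Ec else iter_pd (replicate m b) P (w + s *\<^sub>R b))" for m s
      have DER: "DERIV (diff m) t :> diff (Suc m) t" for m t
      proof (cases "m = 0")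
        case True
        have "((\<lambda>s. iter_pd [] P (w + s *\<^sub>R b)) has_real_derivative iter_pd [b] P (w + t *\<^sub>R b)) (at t)"
          by (rule smooth_on_deriv1[OF sm _ b]) auto
        then have "((\<lambda>s. P (w + s *\<^sub>R b) - Ec) has_real_derivative iter_pd [b] P (w + t *\<^sub>R b)) (at t)"
          by (auto intro!: derivative_eq_intros)
        then show ?thesis using True by (simp add: diff_def[abs_def])
      next
        case False
        have "((\<lambda>s. iter_pd (replicate m b) P (w + s *\<^sub>R b)) has_real_derivative iter_pd (b # replicate m b) P (w + t *\<^sub>R b)) (at t)"
          by (rule smooth_on_deriv1[OF sm _ b]) (use b in auto)
        then show ?thesis using False by (simp add: diff_def[abs_def])
      qed
      define c where "c m = diff m 0 / fact m * nw ^ m" for m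
      have "\<bar>\<Sum>m\<le>k-1. c m * (1/2^i)^m\<bar> \<le> (\<bar>Cq\<bar> * 2^k + Mk) * nw ^ k" if i: "i \<le> k - 1" for i
      proof -
        define s :: real where "s = nw / 2^i"
        have s: "0 < s" "s \<le> nw" using nw by (auto simp: s_def field_simps)
        obtain t where t: "0 < t" "t < s"
          and tay: "diff 0 s = (\<Sum>m<k. (diff m 0 / fact m) * (s - 0)^m) + (diff k t / fact k) * (s - 0)^k"
          using Taylor[of k diff "diff 0" 0 s 0 s] DER k s by auto
        have eqsum: "(\<Sum>m\<le>k-1. c m * (1/2^i)^m) = (\<Sum>m<k. (diff m 0 / fact m) * s^m)"
        proof -
          have "{..k-1} = {..<k}" using k by auto
          then show ?thesis unfolding c_def s_def
            by (simp add: power_divide power_mult_distrib mult.assoc)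
        qed
        have n1: "norm (w + s *\<^sub>R b) \<le> \<rho>"
        proof -
          have "norm (w + s *\<^sub>R b) \<le> nw + s" using norm_triangle_ineq[of w "s *\<^sub>R b"] b s
            by (simp add: nw_def norm_Basis)
          then show ?thesis using s nw by linarith
        qed
        have n2: "norm (w + s *\<^sub>R b) \<le> 2 * nw"
        proof -
          have "norm (w + s *\<^sub>R b) \<le> nw + s" using norm_triangle_ineq[of w "s *\<^sub>R b"] b s
            by (simp add: nw_def norm_Basis)
          then show ?thesis using s nw by linarith
        qed
        have n3: "norm (w + t *\<^sub>R b) \<le> 1"
        proof -
          have "norm (w + t *\<^sub>R b) \<le> nw + t" using norm_triangle_ineq[of w "t *\<^sub>R b"] b t
            by (simp add: nw_def norm_Basis)
          then show ?thesis using s t nw \<rho> by linarith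
        qed
        have b1: "\<bar>diff 0 s\<bar> \<le> \<bar>Cq\<bar> * 2^k * nw^k"
        proof -
          have "\<bar>diff 0 s\<bar> \<le> Cq * norm (w + s *\<^sub>R b) ^ k" using Cq n1 by (simp add: diff_def)
          also have "\<dots> \<le> \<bar>Cq\<bar> * (2 * nw) ^ k"
            by (intro mult_mono power_mono n2) auto
          finally show ?thesis by (simp add: power_mult_distrib)
        qed
        have b2: "\<bar>(diff k t / fact k) * s^k\<bar> \<le> Mk * nw^k"
        proof -
          have dk: "\<bar>diff k t\<bar> \<le> Mk" using Mk[OF b n3] k by (simp add: diff_def)
          have "\<bar>(diff k t / fact k) * s^k\<bar> = \<bar>diff k t\<bar> / fact k * s^k" using s by (simp add: abs_mult)
          also have "\<dots> \<le> \<bar>diff k t\<bar> * s^k"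
            by (intro mult_right_mono) (auto simp: divide_le_eq fact_ge_1 mult_le_cancel_left1 s(1) less_imp_le)
          also have "\<dots> \<le> Mk * nw^k"
            by (intro mult_mono dk power_mono) (use s Mk0 in auto)
          finally show ?thesis .
        qed
        have "(\<Sum>m\<le>k-1. c m * (1/2^i)^m) = diff 0 s - (diff k t / fact k) * s^k"
          using eqsum tay by simp
        then have "\<bar>\<Sum>m\<le>k-1. c m * (1/2^i)^m\<bar> \<le> \<bar>Cq\<bar> * 2^k * nw^k + Mk * nw^k"
          using b1 b2 by linarith
        then show ?thesis by (simp add: algebra_simps)
      qed
      then have "\<forall>j\<le>k-1. \<bar>c j\<bar> \<le> B * ((\<bar>Cq\<bar> * 2^k + Mk) * nw ^ k)" by (intro CB) blast
      then have c1: "\<bar>c 1\<bar> \<le> C * nw ^ k" using k by (auto simp: C_def mult.assoc)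
      have "c 1 = iter_pd [b] P w * nw" by (simp add: c_def diff_def)
      then have "\<bar>iter_pd [b] P w\<bar> * nw \<le> C * nw ^ (k - 1) * nw"
        using c1 nw k by (simp add: abs_mult power_eq_if[of nw k] algebra_simps split: if_splits)
      then show ?thesis using nw by (simp add: nw_def)
    qed
  qed
qed

lemma p0_local:
  fixes P :: "'a::euclidean_space \<Rightarrow> real" and pp :: "nat \<Rightarrow> 'a \<Rightarrow> real"
  assumes sm: "smooth_on UNIV P" and crit: "(P has_derivative (\<lambda>_. 0)) (at 0)"
    and k: "k \<ge> 2" and kN: "k \<le> N"
    and hom: "\<forall>j\<in>{k..N}. homogeneous_deg j (pp j)"
    and expansion: "\<exists>r>0. \<exists>C. \<forall>z. norm z < r \<longrightarrow> \<bar>P z - Ec - (\<Sum>j=k..N. pp j z)\<bar> \<le> C * norm z ^ (N + 1)"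
  shows "\<exists>\<rho>>0. \<rho> \<le> 1 \<and> (\<exists>C\<ge>0. \<forall>w. norm w \<le> \<rho> \<longrightarrow>
            \<bar>P w - Ec - pp k w\<bar> \<le> C * norm w ^ (k + 1) \<and> (\<forall>b\<in>Basis. \<bar>iter_pd [b] P w\<bar> \<le> C * norm w ^ (k - 1)))"
proof -
  obtain r C where r: "r > 0" and expn: "\<forall>z. norm z < r \<longrightarrow> \<bar>P z - Ec - (\<Sum>j=k..N. pp j z)\<bar> \<le> C * norm z ^ (N + 1)"
    using expansion by blast
  obtain \<rho> Bp where \<rho>: "\<rho> > 0" "\<rho> \<le> 1" "\<rho> < r" and Bp: "Bp \<ge> 0"
    and ppb: "\<And>j w. j \<in> {k..N} \<Longrightarrow> norm w \<le> \<rho> \<Longrightarrow> \<bar>pp j w\<bar> \<le> Bp * norm w ^ j"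
    using pp_bound[OF sm _ hom r expn] k by auto
  define C' where "C' = max C 0"
  have C': "C' \<ge> 0" by (simp add: C'_def)
  define C1 where "C1 = C' + real N * Bp"
  have C1: "C1 \<ge> 0" using C' Bp by (simp add: C1_def)
  have est1: "\<bar>P w - Ec - pp k w\<bar> \<le> C1 * norm w ^ (k + 1)" if w: "norm w \<le> \<rho>" for w
  proof -
    have w1: "norm w \<le> 1" using w \<rho> by linarith
    have e: "\<bar>P w - Ec - (\<Sum>j=k..N. pp j w)\<bar> \<le> C' * norm w ^ (k + 1)"
    proof -
      have "\<bar>P w - Ec - (\<Sum>j=k..N. pp j w)\<bar> \<le> C * norm w ^ (N + 1)" using expn w \<rho> by simp
      also have "\<dots> \<le> C' * norm w ^ (N + 1)" by (intro mult_right_mono) (auto simp: C'_def)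
      also have "\<dots> \<le> C' * norm w ^ (k + 1)"
        by (intro mult_left_mono power_decreasing) (use w1 kN C' in auto)
      finally show ?thesis .
    qed
    have s: "\<bar>\<Sum>j=Suc k..N. pp j w\<bar> \<le> real N * Bp * norm w ^ (k + 1)"
    proof -
      have "\<bar>\<Sum>j=Suc k..N. pp j w\<bar> \<le> (\<Sum>j=Suc k..N. \<bar>pp j w\<bar>)" by (rule sum_abs)
      also have "\<dots> \<le> (\<Sum>j=Suc k..N. Bp * norm w ^ (k + 1))"
      proof (rule sum_mono)
        fix j assume j: "j \<in> {Suc k..N}"
        have "\<bar>pp j w\<bar> \<le> Bp * norm w ^ j" using ppb[OF _ w] j by auto
        also have "\<dots> \<le> Bp * norm w ^ (k + 1)"
          by (intro mult_left_mono power_decreasing) (use w1 j Bp in auto)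
        finally show "\<bar>pp j w\<bar> \<le> Bp * norm w ^ (k + 1)" .
      qed
      also have "\<dots> = real (N - k) * (Bp * norm w ^ (k + 1))" by simp
      also have "\<dots> \<le> real N * (Bp * norm w ^ (k + 1))"
        by (intro mult_right_mono) (use Bp in auto)
      finally show ?thesis by (simp add: mult.assoc)
    qed
    have split: "(\<Sum>j=k..N. pp j w) = pp k w + (\<Sum>j=Suc k..N. pp j w)"
      using kN by (simp add: sum.atLeast_Suc_atMost)
    show ?thesis using e s unfolding split C1_def by (simp add: algebra_simps)
  qed
  define Cq where "Cq = C1 + Bp"
  have estq: "\<forall>v. norm v \<le> \<rho> \<longrightarrow> \<bar>P v - Ec\<bar> \<le> Cq * norm v ^ k"
  proof (intro allI impI)
    fix v :: 'a assume v: "norm v \<le> \<rho>"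
    have v1: "norm v \<le> 1" using v \<rho> by linarith
    have "\<bar>P v - Ec\<bar> \<le> \<bar>P v - Ec - pp k v\<bar> + \<bar>pp k v\<bar>" by linarith
    also have "\<dots> \<le> C1 * norm v ^ (k + 1) + Bp * norm v ^ k"
      using est1[OF v] ppb[OF _ v] kN by (intro add_mono) auto
    also have "\<dots> \<le> C1 * norm v ^ k + Bp * norm v ^ k"
      by (intro add_mono mult_left_mono power_decreasing) (use v1 C1 Bp in auto)
    finally show "\<bar>P v - Ec\<bar> \<le> Cq * norm v ^ k" by (simp add: Cq_def algebra_simps)
  qed
  obtain C2 where C2: "C2 \<ge> 0"
    and grad: "\<And>w b. norm w \<le> \<rho> / 2 \<Longrightarrow> b \<in> Basis \<Longrightarrow> \<bar>iter_pd [b] P w\<bar> \<le> C2 * norm w ^ (k - 1)"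
    using grad_from_order[OF sm crit k \<rho>(1,2) estq] by blast
  have A: "\<bar>P w - Ec - pp k w\<bar> \<le> (C1 + C2) * norm w ^ (k + 1)" if w: "norm w \<le> \<rho> / 2" for w
  proof -
    have "\<bar>P w - Ec - pp k w\<bar> \<le> C1 * norm w ^ (k + 1)" using est1 w \<rho> by simp
    also have "\<dots> \<le> (C1 + C2) * norm w ^ (k + 1)" by (intro mult_right_mono) (use C2 in auto)
    finally show ?thesis .
  qed
  have B: "\<bar>iter_pd [b] P w\<bar> \<le> (C1 + C2) * norm w ^ (k - 1)" if w: "norm w \<le> \<rho> / 2" and b: "b \<in> Basis" for w b
  proof -
    have "\<bar>iter_pd [b] P w\<bar> \<le> C2 * norm w ^ (k - 1)" using grad w b by blast
    also have "\<dots> \<le> (C1 + C2) * norm w ^ (k - 1)" by (intro mult_right_mono) (use C1 in auto)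
    finally show ?thesis .
  qed
  have "\<rho> / 2 > 0" "\<rho> / 2 \<le> 1" "C1 + C2 \<ge> 0" using \<rho> C1 C2 by auto
  then show ?thesis using A B by blast
qed

lemma inner_self_deriv:
  fixes \<gamma> :: "real \<Rightarrow> 'v::real_inner"
  assumes "(\<gamma> has_vector_derivative v) (at \<tau>)"
  shows "((\<lambda>t. \<gamma> t \<bullet> \<gamma> t) has_real_derivative 2 * (\<gamma> \<tau> \<bullet> v)) (at \<tau>)"
proof -
  have d: "(\<gamma> has_derivative (\<lambda>h. h *\<^sub>R v)) (at \<tau>)"
    using assms by (simp add: has_vector_derivative_def)
  have "((\<lambda>t. \<gamma> t \<bullet> \<gamma> t) has_derivative (\<lambda>h. \<gamma> \<tau> \<bullet> (h *\<^sub>R v) + (h *\<^sub>R v) \<bullet> \<gamma> \<tau>)) (at \<tau>)"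
    by (rule has_derivative_inner[OF d d])
  moreover have "(\<lambda>h. \<gamma> \<tau> \<bullet> (h *\<^sub>R v) + (h *\<^sub>R v) \<bullet> \<gamma> \<tau>) = (*) (2 * (\<gamma> \<tau> \<bullet> v))"
    by (rule ext) (simp add: inner_commute algebra_simps)
  ultimately show ?thesis by (simp add: has_field_derivative_def)
qed

lemma gronwall_fwd:
  fixes \<gamma> \<gamma>' :: "real \<Rightarrow> 'v::real_inner"
  assumes s: "s \<ge> 0" and L: "L \<ge> 0"
    and der: "\<And>\<tau>. \<tau> \<in> {0..s} \<Longrightarrow> (\<gamma> has_vector_derivative \<gamma>' \<tau>) (at \<tau>)"
    and bd: "\<And>\<tau>. \<tau> \<in> {0..s} \<Longrightarrow> norm (\<gamma> \<tau>) < \<rho> \<Longrightarrow> norm (\<gamma>' \<tau>) \<le> L * norm (\<gamma> \<tau>)"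
    and init: "norm (\<gamma> 0) * exp (L * s) < \<rho>"
  shows "\<forall>\<tau>\<in>{0..s}. norm (\<gamma> \<tau>) \<le> exp (L * \<tau>) * norm (\<gamma> 0)"
proof -
  define h where "h t = exp (- (2 * L) * t) * (\<gamma> t \<bullet> \<gamma> t)" for t
  define h' where "h' t = exp (- (2 * L) * t) * (2 * (\<gamma> t \<bullet> \<gamma>' t)) + exp (- (2 * L) * t) * (- (2 * L)) * (\<gamma> t \<bullet> \<gamma> t)" for t
  have hder: "(h has_real_derivative h' t) (at t)" if "t \<in> {0..s}" for t
  proof -
    have "((\<lambda>t. exp (- (2 * L) * t)) has_real_derivative exp (- (2 * L) * t) * (- (2 * L))) (at t)"
      by (auto intro!: derivative_eq_intros)
    then show ?thesis unfolding h_def[abs_def] h'_def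
      by (rule DERIV_mult'[OF _ inner_self_deriv[OF der[OF that]]])
  qed
  have h'neg: "h' t \<le> 0" if "t \<in> {0..s}" "norm (\<gamma> t) < \<rho>" for t
  proof -
    have "\<gamma> t \<bullet> \<gamma>' t \<le> norm (\<gamma> t) * norm (\<gamma>' t)" by (rule norm_cauchy_schwarz)
    also have "\<dots> \<le> norm (\<gamma> t) * (L * norm (\<gamma> t))" by (intro mult_left_mono bd that) auto
    finally have "\<gamma> t \<bullet> \<gamma>' t \<le> L * (\<gamma> t \<bullet> \<gamma> t)" by (simp add: power2_norm_eq_inner[symmetric] power2_eq_square algebra_simps)
    then have "- (2 * L) * (\<gamma> t \<bullet> \<gamma> t) + 2 * (\<gamma> t \<bullet> \<gamma>' t) \<le> 0" by linarith
    then have "exp (- (2 * L) * t) * (- (2 * L) * (\<gamma> t \<bullet> \<gamma> t) + 2 * (\<gamma> t \<bullet> \<gamma>' t)) \<le> 0"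
      by (simp add: mult_nonneg_nonpos)
    then show ?thesis by (simp add: h'_def algebra_simps)
  qed
  have sub: "norm (\<gamma> t0) \<le> exp (L * t0) * norm (\<gamma> 0)"
    if t0: "t0 \<in> {0..s}" and below: "\<And>z. 0 < z \<Longrightarrow> z < t0 \<Longrightarrow> norm (\<gamma> z) < \<rho>" for t0
  proof (cases "t0 = 0")
    case True then show ?thesis by simp
  next
    case False
    then have t0p: "0 < t0" using t0 by auto
    obtain z where z: "0 < z" "z < t0" and eq: "h t0 - h 0 = (t0 - 0) * h' z"
      using MVT2[OF t0p, of h h'] hder t0 by auto
    have "h' z \<le> 0" using h'neg[of z] z t0 below by auto
    then have "t0 * h' z \<le> 0" using t0p by (simp add: mult_nonneg_nonpos)
    then have "h t0 \<le> h 0" using eq by simp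
    then have "exp (- (2 * L) * t0) * (norm (\<gamma> t0))^2 \<le> (norm (\<gamma> 0))^2"
      by (simp add: h_def power2_norm_eq_inner)
    then have "(norm (\<gamma> t0))^2 \<le> exp (2 * L * t0) * (norm (\<gamma> 0))^2"
      by (simp add: exp_minus field_simps)
    also have "exp (2 * L * t0) = (exp (L * t0))^2"
      by (simp add: power2_eq_square exp_add[symmetric])
    finally have "(norm (\<gamma> t0))^2 \<le> (exp (L * t0) * norm (\<gamma> 0))^2"
      by (simp add: power_mult_distrib)
    then show ?thesis by (rule power2_le_imp_le) simp
  qed
  define A where "A = {t \<in> {0..s}. \<rho> \<le> norm (\<gamma> t)}"
  have Aempty: "A = {}"
  proof (rule ccontr)
    assume ne: "A \<noteq> {}"
    have cont: "continuous_on {0..s} \<gamma>"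
      using der by (meson continuous_at_imp_continuous_on has_vector_derivative_continuous)
    have clA: "closed A"
    proof -
      have "continuous_on {0..s} (\<lambda>t. norm (\<gamma> t))" using cont by (intro continuous_intros)
      then have "closed {t \<in> {0..s}. (\<lambda>_. \<rho>) t \<le> norm (\<gamma> t)}"
        by (intro continuous_on_closed_Collect_le continuous_on_const) auto
      then show ?thesis unfolding A_def by simp
    qed
    have bdd: "bdd_below A" unfolding A_def by (rule bdd_belowI[of _ 0]) auto
    define t1 where "t1 = Inf A"
    have t1A: "t1 \<in> A" unfolding t1_def using closed_contains_Inf[OF ne bdd clA] .
    have below: "norm (\<gamma> z) < \<rho>" if "0 < z" "z < t1" for z
    proof (rule ccontr)
      assume "\<not> norm (\<gamma> z) < \<rho>"
      then have "z \<in> A" using that t1A by (auto simp: A_def)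
      then have "t1 \<le> z" unfolding t1_def using bdd by (rule cInf_lower)
      then show False using that by simp
    qed
    have t1s: "t1 \<in> {0..s}" using t1A by (simp add: A_def)
    have "norm (\<gamma> t1) \<le> exp (L * t1) * norm (\<gamma> 0)" by (rule sub[OF t1s below])
    also have "\<dots> \<le> exp (L * s) * norm (\<gamma> 0)"
      using t1s L by (intro mult_right_mono) (auto intro: mult_left_mono)
    also have "\<dots> < \<rho>" using init by (simp add: mult.commute)
    finally show False using t1A by (simp add: A_def)
  qed
  show ?thesis
  proof
    fix t assume t: "t \<in> {0..s}"
    show "norm (\<gamma> t) \<le> exp (L * t) * norm (\<gamma> 0)"
    proof (rule sub[OF t])
      fix z assume "0 < z" "z < t"
      then have "z \<in> {0..s}" using t by auto
      then show "norm (\<gamma> z) < \<rho>" using Aempty by (force simp: A_def)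
    qed
  qed
qed

lemma curve_bound:
  fixes \<gamma> \<gamma>' :: "real \<Rightarrow> 'v::real_inner"
  assumes der: "\<And>\<tau>. \<tau> \<in> closed_segment 0 s \<Longrightarrow> (\<gamma> has_vector_derivative \<gamma>' \<tau>) (at \<tau>)"
    and L: "L \<ge> 0"
    and bd: "\<And>\<tau>. \<tau> \<in> closed_segment 0 s \<Longrightarrow> norm (\<gamma> \<tau>) < \<rho> \<Longrightarrow> norm (\<gamma>' \<tau>) \<le> L * norm (\<gamma> \<tau>)"
    and init: "norm (\<gamma> 0) * exp (L * \<bar>s\<bar>) < \<rho>"
  shows "\<forall>\<tau>\<in>closed_segment 0 s. norm (\<gamma> \<tau>) \<le> exp (L * \<bar>s\<bar>) * norm (\<gamma> 0)"
proof (cases "s \<ge> 0")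
  case True
  have seg: "closed_segment 0 s = {0..s}" using True by (simp add: closed_segment_eq_real_ivl)
  have g: "\<forall>\<tau>\<in>{0..s}. norm (\<gamma> \<tau>) \<le> exp (L * \<tau>) * norm (\<gamma> 0)"
    by (rule gronwall_fwd[OF True L]) (use der bd init True seg in auto)
  show ?thesis
  proof
    fix \<tau> assume t: "\<tau> \<in> closed_segment 0 s"
    then have "norm (\<gamma> \<tau>) \<le> exp (L * \<tau>) * norm (\<gamma> 0)" using g seg by auto
    also have "\<dots> \<le> exp (L * \<bar>s\<bar>) * norm (\<gamma> 0)"
      using t seg True L by (intro mult_right_mono) (auto intro!: mult_left_mono)
    finally show "norm (\<gamma> \<tau>) \<le> exp (L * \<bar>s\<bar>) * norm (\<gamma> 0)" .
  qed
next
  case False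
  define \<delta> where "\<delta> t = \<gamma> (- t)" for t
  define \<delta>' where "\<delta>' t = - \<gamma>' (- t)" for t
  have seg: "closed_segment 0 s = {s..0}" using False by (simp add: closed_segment_eq_real_ivl)
  have s': "- s \<ge> 0" using False by simp
  have dder: "(\<delta> has_vector_derivative \<delta>' t) (at t)" if t: "t \<in> {0..-s}" for t
  proof -
    have "(uminus has_vector_derivative (-1::real)) (at t)"
      by (auto intro!: derivative_eq_intros simp: has_real_derivative_iff_has_vector_derivative[symmetric])
    moreover have "(\<gamma> has_vector_derivative \<gamma>' (- t)) (at (- t))" using der t seg by auto
    ultimately have "((\<gamma> \<circ> uminus) has_vector_derivative (-1::real) *\<^sub>R \<gamma>' (- t)) (at t)"
      by (rule vector_diff_chain_at)
    then show ?thesis by (simp add: \<delta>_def[abs_def] \<delta>'_def o_def)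
  qed
  have g: "\<forall>\<tau>\<in>{0..-s}. norm (\<delta> \<tau>) \<le> exp (L * \<tau>) * norm (\<delta> 0)"
    by (rule gronwall_fwd[OF s' L dder]) (use bd init seg False in \<open>auto simp: \<delta>_def \<delta>'_def\<close>)
  show ?thesis
  proof
    fix \<tau> assume t: "\<tau> \<in> closed_segment 0 s"
    then have "- \<tau> \<in> {0..-s}" using seg by auto
    then have "norm (\<delta> (- \<tau>)) \<le> exp (L * (- \<tau>)) * norm (\<delta> 0)" using g by blast
    then have "norm (\<gamma> \<tau>) \<le> exp (L * (- \<tau>)) * norm (\<gamma> 0)" by (simp add: \<delta>_def)
    also have "\<dots> \<le> exp (L * \<bar>s\<bar>) * norm (\<gamma> 0)"
      using t seg False L by (intro mult_right_mono) (auto intro!: mult_left_mono)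
    finally show "norm (\<gamma> \<tau>) \<le> exp (L * \<bar>s\<bar>) * norm (\<gamma> 0)" .
  qed
qed

lemma curve_increment:
  fixes \<gamma> \<gamma>' :: "real \<Rightarrow> 'v::real_normed_vector"
  assumes der: "\<And>\<tau>. \<tau> \<in> closed_segment 0 s \<Longrightarrow> (\<gamma> has_vector_derivative \<gamma>' \<tau>) (at \<tau>)"
    and bd: "\<And>\<tau>. \<tau> \<in> closed_segment 0 s \<Longrightarrow> norm (\<gamma>' \<tau>) \<le> M"
  shows "norm (\<gamma> s - \<gamma> 0) \<le> M * \<bar>s\<bar>"
proof -
  have "norm (\<gamma> s - \<gamma> 0) \<le> M * norm (s - 0)"
  proof (rule differentiable_bound[of "closed_segment 0 s" \<gamma> "\<lambda>\<tau> h. h *\<^sub>R \<gamma>' \<tau>"])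
    show "convex (closed_segment 0 s)" by simp
  next
    fix x assume "x \<in> closed_segment 0 s"
    then show "(\<gamma> has_derivative (\<lambda>h. h *\<^sub>R \<gamma>' x)) (at x within closed_segment 0 s)"
      using der has_vector_derivative_def has_derivative_at_withinI by blast
  next
    fix x assume x: "x \<in> closed_segment 0 s"
    show "onorm (\<lambda>h. h *\<^sub>R \<gamma>' x) \<le> M"
    proof (rule onorm_le)
      fix h :: real
      show "norm (h *\<^sub>R \<gamma>' x) \<le> M * norm h" using bd[OF x]
        by (simp add: mult.commute[of M] mult_left_mono)
    qed
  qed auto
  then show ?thesis by simp
qed

lemma sum_Basis_inner:
  fixes e :: "'b::euclidean_space"
  assumes "e \<in> Basis"
  shows "(\<Sum>b\<in>Basis. (e \<bullet> b) * D b) = D e"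
proof -
  have "(\<Sum>b\<in>Basis. (e \<bullet> b) * D b) = (\<Sum>b\<in>Basis. if b = e then D b else 0)"
    by (rule sum.cong) (use assms in \<open>auto simp: inner_Basis\<close>)
  also have "\<dots> = D e" using assms by (simp add: sum.delta')
  finally show ?thesis .
qed

lemma pgrad_of_comp:
  fixes F :: "'b::euclidean_space \<Rightarrow> real" and j :: "real^'n \<Rightarrow> 'b"
  assumes dF: "(F has_derivative (\<lambda>h. \<Sum>b\<in>Basis. (h \<bullet> b) * D b)) (at (j v))"
    and dj: "(j has_derivative jl) (at v)" and B: "\<And>i. jl (axis i 1) \<in> Basis"
  shows "pgrad (\<lambda>u. F (j u)) v = (\<chi> i. D (jl (axis i 1)))"
proof -
  have "((\<lambda>u. F (j u)) has_derivative (\<lambda>h. \<Sum>b\<in>Basis. (jl h \<bullet> b) * D b)) (at v)"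
    using has_derivative_compose[OF dj dF] .
  then have "frechet_derivative (\<lambda>u. F (j u)) (at v) = (\<lambda>h. \<Sum>b\<in>Basis. (jl h \<bullet> b) * D b)"
    using frechet_derivative_at by metis
  then show ?thesis unfolding pgrad_def using sum_Basis_inner[OF B] by simp
qed

lemma basis_snd: "((0::real^'n), axis i (1::real)) \<in> (Basis :: ((real^'n) \<times> (real^'n)) set)"
  by (auto simp: Basis_prod_def)

lemma basis_fst: "(axis i (1::real), (0::real^'n)) \<in> (Basis :: ((real^'n) \<times> (real^'n)) set)"
  by (auto simp: Basis_prod_def)

lemma basis_S_snd: "((0::real), (0::real^'n), axis i (1::real)) \<in> (Basis :: (real \<times> (real^'n) \<times> (real^'n)) set)"
  by (auto simp: Basis_prod_def)

lemma basis_S_t: "((1::real), (0::(real^'n) \<times> (real^'n))) \<in> (Basis :: (real \<times> (real^'n) \<times> (real^'n)) set)"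
  by (auto simp: Basis_prod_def)

lemma ham_field_partials:
  fixes p0 :: "real^'n \<Rightarrow> real^'n \<Rightarrow> real"
  assumes sm: "smooth_on UNIV (\<lambda>(x, \<xi>). p0 x \<xi>)"
  shows "ham_field p0 w = ((\<chi> i. iter_pd [(0, axis i 1)] (\<lambda>(x, \<xi>). p0 x \<xi>) w),
                           - (\<chi> i. iter_pd [(axis i 1, 0)] (\<lambda>(x, \<xi>). p0 x \<xi>) w))"
proof -
  let ?P = "\<lambda>(x, \<xi>). p0 x \<xi>"
  have dP: "(?P has_derivative (\<lambda>h. \<Sum>b\<in>Basis. (h \<bullet> b) * iter_pd [b] ?P w')) (at w')" for w'
    using smooth_on_has_derivative[OF sm open_UNIV UNIV_I, of "[]"] by simp
  obtain x \<xi> where w: "w = (x, \<xi>)" by fastforce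
  have d1: "((\<lambda>u. (x, u)) has_derivative (\<lambda>v. (0, v))) (at \<xi>)"
    by (auto intro!: derivative_eq_intros)
  have d2: "((\<lambda>u. (u, \<xi>)) has_derivative (\<lambda>v. (v, 0))) (at x)"
    by (auto intro!: derivative_eq_intros)
  have g1: "pgrad (\<lambda>u. p0 x u) \<xi> = (\<chi> i. iter_pd [(0, axis i 1)] ?P w)"
  proof -
    have "pgrad (\<lambda>u. ?P (x, u)) \<xi> = (\<chi> i. iter_pd [((\<lambda>v. (0, v)) (axis i 1))] ?P w)"
      by (rule pgrad_of_comp[OF _ d1 basis_snd, of ?P "\<lambda>b. iter_pd [b] ?P w"]) (use dP[of w] w in simp_all)
    then show ?thesis by (simp only: case_prod_conv)
  qed
  have g2: "pgrad (\<lambda>u. p0 u \<xi>) x = (\<chi> i. iter_pd [(axis i 1, 0)] ?P w)"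
  proof -
    have "pgrad (\<lambda>u. ?P (u, \<xi>)) x = (\<chi> i. iter_pd [((\<lambda>v. (v, 0)) (axis i 1))] ?P w)"
      by (rule pgrad_of_comp[OF _ d2 basis_fst, of ?P "\<lambda>b. iter_pd [b] ?P w"]) (use dP[of w] w in simp_all)
    then show ?thesis by (simp only: case_prod_conv)
  qed
  show ?thesis unfolding ham_field_def w fst_conv snd_conv g1[unfolded w] g2[unfolded w] ..
qed

lemma flow_increment:
  fixes p0 :: "real^'n \<Rightarrow> real^'n \<Rightarrow> real"
  assumes flow: "is_ham_flow p0 \<Omega> \<Phi>"
    and Hb: "\<And>w. norm w < \<rho>1 \<Longrightarrow> norm (ham_field p0 w) \<le> C2 * norm w ^ (k - 1)"
    and \<rho>1: "\<rho>1 \<le> 1" and C2: "C2 \<ge> 0" and k: "k \<ge> 2"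
    and sw: "(s, w0) \<in> \<Omega>" and sB: "\<bar>s\<bar> \<le> Bt"
    and init: "norm w0 * exp (C2 * Bt) < \<rho>1"
  shows "norm (\<Phi> s w0 - w0) \<le> C2 * (exp (C2 * Bt) * norm w0) ^ (k - 1) * \<bar>s\<bar>"
proof -
  have om: "(0, w0) \<in> \<Omega>" "\<Phi> 0 w0 = w0" "is_interval {t. (t, w0) \<in> \<Omega>}"
    and dflow: "\<And>t. (t, w0) \<in> \<Omega> \<Longrightarrow> ((\<lambda>s. \<Phi> s w0) has_vector_derivative ham_field p0 (\<Phi> t w0)) (at t)"
  proof -
    have f1: "\<forall>z. (0, z) \<in> \<Omega> \<and> \<Phi> 0 z = z \<and> is_interval {t. (t, z) \<in> \<Omega>}"
      and f2: "\<forall>t z. (t, z) \<in> \<Omega> \<longrightarrow> ((\<lambda>s. \<Phi> s z) has_vector_derivative ham_field p0 (\<Phi> t z)) (at t)"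
      using flow unfolding is_ham_flow_def by blast+
    show "(0, w0) \<in> \<Omega>" "\<Phi> 0 w0 = w0" "is_interval {t. (t, w0) \<in> \<Omega>}" using f1 by blast+
    show "\<And>t. (t, w0) \<in> \<Omega> \<Longrightarrow> ((\<lambda>s. \<Phi> s w0) has_vector_derivative ham_field p0 (\<Phi> t w0)) (at t)"
      using f2 by blast
  qed
  have seg: "closed_segment 0 s \<subseteq> {t. (t, w0) \<in> \<Omega>}"
    using is_interval_convex[OF om(3)] om(1) sw by (intro closed_segment_subset) auto
  define \<gamma> where "\<gamma> t = \<Phi> t w0" for t
  define \<gamma>' where "\<gamma>' t = ham_field p0 (\<Phi> t w0)" for t
  have der: "(\<gamma> has_vector_derivative \<gamma>' \<tau>) (at \<tau>)" if "\<tau> \<in> closed_segment 0 s" for \<tau>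
    using dflow[of \<tau>] seg that unfolding \<gamma>_def[abs_def] \<gamma>'_def by auto
  have pw: "a ^ (k - 1) \<le> a" if "0 \<le> a" "a \<le> 1" for a :: real
    using power_decreasing[of 1 "k - 1" a] that k by simp
  have bd: "norm (\<gamma>' \<tau>) \<le> C2 * norm (\<gamma> \<tau>)" if "\<tau> \<in> closed_segment 0 s" "norm (\<gamma> \<tau>) < \<rho>1" for \<tau>
  proof -
    have "norm (\<gamma>' \<tau>) \<le> C2 * norm (\<gamma> \<tau>) ^ (k - 1)" using Hb that by (simp add: \<gamma>_def \<gamma>'_def)
    also have "\<dots> \<le> C2 * norm (\<gamma> \<tau>)" using that \<rho>1 C2 by (intro mult_left_mono pw) auto
    finally show ?thesis .
  qed
  have e1: "exp (C2 * \<bar>s\<bar>) \<le> exp (C2 * Bt)" using sB C2 by (simp add: mult_left_mono)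
  have init': "norm (\<gamma> 0) * exp (C2 * \<bar>s\<bar>) < \<rho>1"
  proof -
    have "norm (\<gamma> 0) * exp (C2 * \<bar>s\<bar>) \<le> norm w0 * exp (C2 * Bt)"
      using e1 om(2) by (simp add: \<gamma>_def mult_left_mono)
    then show ?thesis using init by linarith
  qed
  have cb: "\<forall>\<tau>\<in>closed_segment 0 s. norm (\<gamma> \<tau>) \<le> exp (C2 * \<bar>s\<bar>) * norm (\<gamma> 0)"
    by (rule curve_bound[OF der C2 bd init']) auto
  have gb: "norm (\<gamma> \<tau>) \<le> exp (C2 * Bt) * norm w0" if "\<tau> \<in> closed_segment 0 s" for \<tau>
  proof -
    have "norm (\<gamma> \<tau>) \<le> exp (C2 * \<bar>s\<bar>) * norm w0" using cb that om(2) by (simp add: \<gamma>_def)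
    also have "\<dots> \<le> exp (C2 * Bt) * norm w0" using e1 by (simp add: mult_right_mono)
    finally show ?thesis .
  qed
  have db: "norm (\<gamma>' \<tau>) \<le> C2 * (exp (C2 * Bt) * norm w0) ^ (k - 1)" if "\<tau> \<in> closed_segment 0 s" for \<tau>
  proof -
    have lt: "norm (\<gamma> \<tau>) < \<rho>1" using gb[OF that] init by (simp add: mult.commute)
    have "norm (\<gamma>' \<tau>) \<le> C2 * norm (\<gamma> \<tau>) ^ (k - 1)" using Hb lt by (simp add: \<gamma>_def \<gamma>'_def)
    also have "\<dots> \<le> C2 * (exp (C2 * Bt) * norm w0) ^ (k - 1)"
      using gb[OF that] C2 by (intro mult_left_mono power_mono) auto
    finally show ?thesis .
  qed
  have "norm (\<gamma> s - \<gamma> 0) \<le> C2 * (exp (C2 * Bt) * norm w0) ^ (k - 1) * \<bar>s\<bar>"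
    by (rule curve_increment[OF der db])
  then show ?thesis using om(2) by (simp add: \<gamma>_def)
qed

lemma S_partials:
  fixes S :: "real \<Rightarrow> real^'n \<Rightarrow> real^'n \<Rightarrow> real"
  assumes sm: "smooth_on (T \<times> W) (\<lambda>(t, x, \<xi>). S t x \<xi>)" and T: "open T" and W: "open W"
    and s: "s \<in> T" and xw: "(x, \<xi>) \<in> W"
  shows "pgrad (\<lambda>\<eta>. S s x \<eta>) \<xi> = (\<chi> i. iter_pd [(0, 0, axis i 1)] (\<lambda>(t, x, \<xi>). S t x \<xi>) (s, x, \<xi>))"
    and "((\<lambda>\<tau>. S \<tau> x \<xi>) has_real_derivative iter_pd [(1, 0)] (\<lambda>(t, x, \<xi>). S t x \<xi>) (s, x, \<xi>)) (at s)"
proof -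
  let ?Sf = "\<lambda>(t, x, \<xi>). S t x \<xi>"
  have op: "open (T \<times> W)" using T W by (rule open_Times)
  have mem: "(s, x, \<xi>) \<in> T \<times> W" using s xw by simp
  have dS: "(?Sf has_derivative (\<lambda>h. \<Sum>b\<in>Basis. (h \<bullet> b) * iter_pd [b] ?Sf (s, x, \<xi>))) (at (s, x, \<xi>))"
    using smooth_on_has_derivative[OF sm op mem, of "[]"] by simp
  have dj: "((\<lambda>u. (s, x, u)) has_derivative (\<lambda>v. (0, 0, v))) (at \<xi>)"
    by (auto intro!: derivative_eq_intros)
  have "pgrad (\<lambda>u. ?Sf (s, x, u)) \<xi> = (\<chi> i. iter_pd [((\<lambda>v. (0::real, 0::real^'n, v)) (axis i 1))] ?Sf (s, x, \<xi>))"
    by (rule pgrad_of_comp[OF _ dj basis_S_snd, of ?Sf "\<lambda>b. iter_pd [b] ?Sf (s, x, \<xi>)"]) (use dS in simp_all)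
  then show "pgrad (\<lambda>\<eta>. S s x \<eta>) \<xi> = (\<chi> i. iter_pd [(0, 0, axis i 1)] ?Sf (s, x, \<xi>))"
    by (simp only: case_prod_conv)
  have "((\<lambda>\<tau>. iter_pd [] ?Sf ((0, x, \<xi>) + \<tau> *\<^sub>R (1, 0))) has_real_derivative
           iter_pd [(1, 0)] ?Sf ((0, x, \<xi>) + s *\<^sub>R (1, 0))) (at s)"
    by (rule smooth_on_deriv1[OF sm _ basis_S_t]) (use mem in simp_all)
  then show "((\<lambda>\<tau>. S \<tau> x \<xi>) has_real_derivative iter_pd [(1, 0)] ?Sf (s, x, \<xi>)) (at s)"
    by simp
qed

lemma cont_bound_compact:
  fixes f :: "'a::topological_space \<Rightarrow> real"
  assumes "continuous_on S f" "compact Q" "Q \<subseteq> S"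
  shows "\<exists>M. \<forall>q\<in>Q. \<bar>f q\<bar> \<le> M"
proof -
  have "compact (f ` Q)"
    using assms by (intro compact_continuous_image continuous_on_subset[OF assms(1)]) auto
  then have "bounded (f ` Q)" by (rule compact_imp_bounded)
  then obtain M where "\<forall>y\<in>f ` Q. norm y \<le> M" unfolding bounded_iff by blast
  then show ?thesis by (intro exI[of _ M]) auto
qed

lemma finite_bound:
  fixes f :: "'i \<Rightarrow> 'a \<Rightarrow> real"
  assumes "finite I" "\<And>i. i \<in> I \<Longrightarrow> \<exists>M. \<forall>q\<in>Q. \<bar>f i q\<bar> \<le> M"
  shows "\<exists>M\<ge>0. \<forall>i\<in>I. \<forall>q\<in>Q. \<bar>f i q\<bar> \<le> M"
proof -
  obtain Mf where Mf: "\<And>i q. i \<in> I \<Longrightarrow> q \<in> Q \<Longrightarrow> \<bar>f i q\<bar> \<le> Mf i"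
    using assms(2) by metis
  have "\<bar>f i q\<bar> \<le> (\<Sum>j\<in>I. \<bar>Mf j\<bar>)" if "i \<in> I" "q \<in> Q" for i q
  proof -
    have "Mf i \<le> \<bar>Mf i\<bar>" by simp
    also have "\<dots> \<le> (\<Sum>j\<in>I. \<bar>Mf j\<bar>)" by (rule member_le_sum) (use that assms(1) in auto)
    finally show ?thesis using Mf[OF that] by linarith
  qed
  moreover have "(\<Sum>j\<in>I. \<bar>Mf j\<bar>) \<ge> 0" by (simp add: sum_nonneg)
  ultimately show ?thesis by blast
qed

lemma sum_Basis_bound:
  fixes h :: "'b::euclidean_space"
  assumes "\<And>b. b \<in> Basis \<Longrightarrow> \<bar>X b\<bar> \<le> B"
  shows "\<bar>\<Sum>b\<in>Basis. (h \<bullet> b) * X b\<bar> \<le> real DIM('b) * B * norm h"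
proof -
  have "\<bar>\<Sum>b\<in>Basis. (h \<bullet> b) * X b\<bar> \<le> (\<Sum>b\<in>Basis. \<bar>(h \<bullet> b) * X b\<bar>)" by (rule sum_abs)
  also have "\<dots> \<le> (\<Sum>b\<in>(Basis::'b set). norm h * B)"
  proof (rule sum_mono)
    fix b :: 'b assume b: "b \<in> Basis"
    have "\<bar>(h \<bullet> b) * X b\<bar> = \<bar>h \<bullet> b\<bar> * \<bar>X b\<bar>" by (simp add: abs_mult)
    also have "\<dots> \<le> norm h * B"
      using Basis_le_norm[OF b, of h] assms[OF b] by (intro mult_mono) auto
    finally show "\<bar>(h \<bullet> b) * X b\<bar> \<le> norm h * B" .
  qed
  also have "\<dots> = real DIM('b) * B * norm h" by simp
  finally show ?thesis .
qed

lemma P_diff_bound: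
  fixes P :: "'a::euclidean_space \<Rightarrow> real"
  assumes sm: "smooth_on UNIV P"
    and gP: "\<And>w b. norm w \<le> \<rho>1 \<Longrightarrow> b \<in> Basis \<Longrightarrow> \<bar>iter_pd [b] P w\<bar> \<le> C1 * norm w ^ (k - 1)"
    and C1: "C1 \<ge> 0" and R: "R \<le> \<rho>1"
    and u: "norm u \<le> R" and v: "norm v \<le> R"
  shows "\<bar>P u - P v\<bar> \<le> real DIM('a) * (C1 * R ^ (k - 1)) * norm (u - v)"
proof -
  have "norm (P u - P v) \<le> real DIM('a) * (C1 * R ^ (k - 1)) * norm (u - v)"
  proof (rule differentiable_bound[of "cball 0 R" P "\<lambda>w h. \<Sum>b\<in>Basis. (h \<bullet> b) * iter_pd [b] P w"])
    fix w :: 'a assume "w \<in> cball 0 R"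
    show "(P has_derivative (\<lambda>h. \<Sum>b\<in>Basis. (h \<bullet> b) * iter_pd [b] P w)) (at w within cball 0 R)"
    proof -
      have d: "(iter_pd [] P has_derivative (\<lambda>h. \<Sum>b\<in>Basis. (h \<bullet> b) * iter_pd [b] P w)) (at w)"
        by (rule smooth_on_has_derivative[OF sm open_UNIV UNIV_I]) simp
      then have "(P has_derivative (\<lambda>h. \<Sum>b\<in>Basis. (h \<bullet> b) * iter_pd [b] P w)) (at w)"
        unfolding iter_pd.simps(1) .
      then show ?thesis by (rule has_derivative_at_withinI)
    qed
  next
    fix w :: 'a assume w: "w \<in> cball 0 R"
    show "onorm (\<lambda>h. \<Sum>b\<in>Basis. (h \<bullet> b) * iter_pd [b] P w) \<le> real DIM('a) * (C1 * R ^ (k - 1))"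
    proof (rule onorm_le)
      fix h :: 'a
      have "\<bar>iter_pd [b] P w\<bar> \<le> C1 * R ^ (k - 1)" if b: "b \<in> Basis" for b
      proof -
        have "norm w \<le> \<rho>1" using w R by simp
        then have "\<bar>iter_pd [b] P w\<bar> \<le> C1 * norm w ^ (k - 1)" using gP[OF _ b] by blast
        also have "\<dots> \<le> C1 * R ^ (k - 1)" using w C1 by (intro mult_left_mono power_mono) auto
        finally show ?thesis .
      qed
      then have "\<bar>\<Sum>b\<in>Basis. (h \<bullet> b) * iter_pd [b] P w\<bar> \<le> real DIM('a) * (C1 * R ^ (k - 1)) * norm h"
        by (rule sum_Basis_bound)
      then show "norm (\<Sum>b\<in>Basis. (h \<bullet> b) * iter_pd [b] P w) \<le> real DIM('a) * (C1 * R ^ (k - 1)) * norm h"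
        unfolding real_norm_def .
    qed
  qed (use u v in auto)
  then show ?thesis by simp
qed

lemma S_grad_lip:
  fixes Sf :: "real \<times> ((real^'n) \<times> (real^'n)) \<Rightarrow> real"
  assumes sm: "smooth_on (T \<times> W) Sf" and T: "open T" and W: "open W"
    and s: "s \<in> T" and ball: "cball 0 \<rho>0 \<subseteq> W" and e: "e \<in> Basis"
    and M: "\<And>b z. b \<in> Basis \<Longrightarrow> z \<in> cball 0 \<rho>0 \<Longrightarrow> \<bar>iter_pd [b, e] Sf (s, z)\<bar> \<le> M"
    and z: "z \<in> cball 0 \<rho>0"
  shows "\<bar>iter_pd [e] Sf (s, z) - iter_pd [e] Sf (s, 0)\<bar> \<le> real DIM(real \<times> ((real^'n) \<times> (real^'n))) * M * norm z"
proof -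
  have op: "open (T \<times> W)" using T W by (rule open_Times)
  let ?g = "\<lambda>z. iter_pd [e] Sf (s, z)"
  have "norm (?g z - ?g 0) \<le> real DIM(real \<times> ((real^'n) \<times> (real^'n))) * M * norm (z - 0)"
  proof (rule differentiable_bound[of "cball 0 \<rho>0" ?g "\<lambda>w h. \<Sum>b\<in>Basis. ((0, h) \<bullet> b) * iter_pd [b, e] Sf (s, w)"])
    fix w :: "(real^'n) \<times> (real^'n)" assume w: "w \<in> cball 0 \<rho>0"
    have mem: "(s, w) \<in> T \<times> W" using s w ball by auto
    have d1: "((\<lambda>z. (s, z)) has_derivative (\<lambda>h. (0, h))) (at w)"
      by (auto intro!: derivative_eq_intros)
    have d2: "(iter_pd [e] Sf has_derivative (\<lambda>h. \<Sum>b\<in>Basis. (h \<bullet> b) * iter_pd [b, e] Sf (s, w))) (at (s, w))"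
    proof -
      have "set [e] \<subseteq> Basis" using e by simp
      then show ?thesis by (rule smooth_on_has_derivative[OF sm op mem])
    qed
    show "(?g has_derivative (\<lambda>h. \<Sum>b\<in>Basis. ((0, h) \<bullet> b) * iter_pd [b, e] Sf (s, w))) (at w within cball 0 \<rho>0)"
      by (rule has_derivative_at_withinI[OF has_derivative_compose[OF d1 d2]])
  next
    fix w :: "(real^'n) \<times> (real^'n)" assume w: "w \<in> cball 0 \<rho>0"
    show "onorm (\<lambda>h. \<Sum>b\<in>Basis. ((0, h) \<bullet> b) * iter_pd [b, e] Sf (s, w)) \<le> real DIM(real \<times> ((real^'n) \<times> (real^'n))) * M"
    proof (rule onorm_le)
      fix h :: "(real^'n) \<times> (real^'n)"
      have "\<bar>\<Sum>b\<in>Basis. ((0::real, h) \<bullet> b) * iter_pd [b, e] Sf (s, w)\<bar>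
           \<le> real DIM(real \<times> ((real^'n) \<times> (real^'n))) * M * norm (0::real, h)"
        by (rule sum_Basis_bound) (rule M, assumption, rule w)
      moreover have nh: "norm (0::real, h) = norm h" by (simp add: norm_Pair)
      ultimately show "norm (\<Sum>b\<in>Basis. ((0, h) \<bullet> b) * iter_pd [b, e] Sf (s, w)) \<le> real DIM(real \<times> ((real^'n) \<times> (real^'n))) * M * norm h"
        unfolding real_norm_def by simp
    qed
  qed (use z in \<open>auto intro: order_trans[OF norm_ge_zero]\<close>)
  then show ?thesis by simp
qed

theorem lemma4:
  fixes p0 :: "real^'n \<Rightarrow> real^'n \<Rightarrow> real" and Ec :: real and k N :: nat
    and pp :: "nat \<Rightarrow> (real^'n) \<times> (real^'n) \<Rightarrow> real"
    and \<Phi> :: "real \<Rightarrow> (real^'n) \<times> (real^'n) \<Rightarrow> (real^'n) \<times> (real^'n)"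
    and \<Omega> :: "(real \<times> ((real^'n) \<times> (real^'n))) set"
    and S :: "real \<Rightarrow> real^'n \<Rightarrow> real^'n \<Rightarrow> real"
    and T :: "real set" and W :: "((real^'n) \<times> (real^'n)) set"
  assumes p0_smooth: "smooth_on UNIV (\<lambda>(x, \<xi>). p0 x \<xi>)"
    and crit: "((\<lambda>(x, \<xi>). p0 x \<xi>) has_derivative (\<lambda>_. 0)) (at 0)"
    and k_gt: "k > 2" and kN: "k \<le> N"
    and hom: "\<forall>j\<in>{k..N}. homogeneous_deg j (pp j)"
    and expansion: "\<exists>r>0. \<exists>C. \<forall>z. norm z < r \<longrightarrow>
                      \<bar>p0 (fst z) (snd z) - Ec - (\<Sum>j=k..N. pp j z)\<bar> \<le> C * norm z ^ (N + 1)"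
    and flow: "is_ham_flow p0 \<Omega> \<Phi>"
    and T_open: "open T" and T_int: "is_interval T" and T0: "0 \<in> T"
    and W_open: "open W" and W0: "0 \<in> W"
    and S_smooth: "smooth_on (T \<times> W) (\<lambda>(t, x, \<xi>). S t x \<xi>)"
    and gen: "\<forall>t\<in>T. \<forall>x \<xi>. (x, \<xi>) \<in> W \<longrightarrow>
                 (t, (pgrad (\<lambda>\<eta>. S t x \<eta>) \<xi>, \<xi>)) \<in> \<Omega> \<and>
                 \<Phi> t (pgrad (\<lambda>\<eta>. S t x \<eta>) \<xi>, \<xi>) = (x, pgrad (\<lambda>y. S t y \<xi>) x)"
    and HJ: "\<forall>t\<in>T. \<forall>x \<xi>. (x, \<xi>) \<in> W \<longrightarrow>
                 deriv (\<lambda>s. S s x \<xi>) t + p0 x (pgrad (\<lambda>y. S t y \<xi>) x) = 0"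
    and init: "\<forall>x \<xi>. (x, \<xi>) \<in> W \<longrightarrow> S 0 x \<xi> = inner x \<xi>"
  shows "\<exists>R :: (real^'n) \<times> (real^'n) \<Rightarrow> real.
           (\<exists>r>0. \<exists>C. \<forall>z. norm z < r \<longrightarrow> \<bar>R z\<bar> \<le> C * norm z ^ (k + 1)) \<and>
           (\<forall>K. compact K \<and> K \<subseteq> T \<longrightarrow>
              (\<exists>G :: real \<Rightarrow> (real^'n) \<times> (real^'n) \<Rightarrow> real. \<exists>r>0. \<exists>C.
                 \<forall>t\<in>K. \<forall>x \<xi>. norm (x, \<xi>) < r \<longrightarrow>
                   S t x \<xi> - inner x \<xi> + t * Ec = - t * (pp k (x, \<xi>) + R (x, \<xi>) + t * G t (x, \<xi>)) \<and>
                   \<bar>G t (x, \<xi>)\<bar> \<le> C * norm (x, \<xi>) ^ (k + 1)))"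
proof -
  define P :: "(real^'n) \<times> (real^'n) \<Rightarrow> real" where "P = (\<lambda>(x, \<xi>). p0 x \<xi>)"
  define Sf :: "real \<times> (real^'n) \<times> (real^'n) \<Rightarrow> real" where "Sf = (\<lambda>(t, x, \<xi>). S t x \<xi>)"
  have Pxe: "P (x, \<xi>) = p0 x \<xi>" for x \<xi> by (simp add: P_def)
  have Pz: "P z = p0 (fst z) (snd z)" for z by (simp add: P_def split_beta)
  have k2: "k \<ge> 2" and k3: "k \<ge> 3" using k_gt by simp_all
  have Psm: "smooth_on UNIV P" unfolding P_def by (rule p0_smooth)
  have Pcrit: "(P has_derivative (\<lambda>_. 0)) (at 0)" unfolding P_def by (rule crit)
  have Ssm: "smooth_on (T \<times> W) Sf" unfolding Sf_def by (rule S_smooth)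
  have expP: "\<exists>r>0. \<exists>C. \<forall>z. norm z < r \<longrightarrow> \<bar>P z - Ec - (\<Sum>j=k..N. pp j z)\<bar> \<le> C * norm z ^ (N + 1)"
    using expansion unfolding Pz .
  obtain \<rho>1 C1 where \<rho>1: "\<rho>1 > 0" "\<rho>1 \<le> 1" and C1: "C1 \<ge> 0"
    and est: "\<And>w. norm w \<le> \<rho>1 \<Longrightarrow> \<bar>P w - Ec - pp k w\<bar> \<le> C1 * norm w ^ (k + 1)"
    and gP: "\<And>w b. norm w \<le> \<rho>1 \<Longrightarrow> b \<in> Basis \<Longrightarrow> \<bar>iter_pd [b] P w\<bar> \<le> C1 * norm w ^ (k - 1)"
    using p0_local[OF Psm Pcrit k2 kN hom expP] by metis
  define C2 where "C2 = 2 * real CARD('n) * C1"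
  have C2: "C2 \<ge> 0" using C1 by (simp add: C2_def)
  have Hb: "norm (ham_field p0 w) \<le> C2 * norm w ^ (k - 1)" if w: "norm w < \<rho>1" for w
  proof -
    have hf: "ham_field p0 w = ((\<chi> i. iter_pd [(0, axis i 1)] P w), - (\<chi> i. iter_pd [(axis i 1, 0)] P w))"
      unfolding P_def by (rule ham_field_partials[OF p0_smooth])
    have vb: "norm (\<chi> i. iter_pd [f i] P w) \<le> real CARD('n) * (C1 * norm w ^ (k - 1))"
      if f: "\<And>i. f i \<in> Basis" for f :: "'n \<Rightarrow> (real^'n) \<times> (real^'n)"
    proof -
      have "norm (\<chi> i. iter_pd [f i] P w) \<le> (\<Sum>i\<in>UNIV. \<bar>(\<chi> i. iter_pd [f i] P w) $ i\<bar>)"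
        by (rule norm_le_l1_cart)
      also have "\<dots> \<le> (\<Sum>i\<in>(UNIV::'n set). C1 * norm w ^ (k - 1))"
      proof (rule sum_mono)
        fix i :: 'n
        have "norm w \<le> \<rho>1" using w by simp
        then show "\<bar>(\<chi> i. iter_pd [f i] P w) $ i\<bar> \<le> C1 * norm w ^ (k - 1)"
          using gP f by simp
      qed
      also have "\<dots> = real CARD('n) * (C1 * norm w ^ (k - 1))" by simp
      finally show ?thesis .
    qed
    have "norm (ham_field p0 w) \<le> norm (\<chi> i. iter_pd [(0, axis i 1)] P w) + norm (- (\<chi> i. iter_pd [(axis i 1, 0)] P w))"
      unfolding hf by (rule norm_Pair_le)
    also have "\<dots> \<le> real CARD('n) * (C1 * norm w ^ (k - 1)) + real CARD('n) * (C1 * norm w ^ (k - 1))"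
      unfolding norm_minus_cancel
      by (intro add_mono vb basis_snd basis_fst)
    finally show ?thesis by (simp add: C2_def algebra_simps)
  qed
  show ?thesis
  proof (intro exI[of _ "\<lambda>z. P z - Ec - pp k z"] conjI allI impI)
    show "\<exists>r>0. \<exists>C. \<forall>z. norm z < r \<longrightarrow> \<bar>P z - Ec - pp k z\<bar> \<le> C * norm z ^ (k + 1)"
      using est \<rho>1 by (intro exI[of _ \<rho>1] conjI exI[of _ C1]) auto
  next
    fix K :: "real set" assume K: "compact K \<and> K \<subseteq> T"
    obtain a b where ab: "a \<le> 0" "0 \<le> b" "{a..b} \<subseteq> T" "K \<subseteq> {a..b}"
    proof (cases "K = {}")
      case True
      then show ?thesis using that[of 0 0] T0 by auto
    next
      case False
      have bK: "bounded K" using K compact_imp_bounded by blast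
      have clK: "closed K" using K compact_imp_closed by blast
      have bb: "bdd_below K" "bdd_above K" using bK bounded_imp_bdd_below bounded_imp_bdd_above by auto
      have iK: "Inf K \<in> K" using closed_contains_Inf[OF False bb(1) clK] .
      have sK: "Sup K \<in> K" using closed_contains_Sup[OF False bb(2) clK] .
      define a where "a = min (Inf K) 0"
      define b where "b = max (Sup K) 0"
      have aT: "a \<in> T" using iK K T0 by (auto simp: a_def min_def)
      have bT: "b \<in> T" using sK K T0 by (auto simp: b_def max_def)
      have "{a..b} \<subseteq> T"
      proof
        fix t assume "t \<in> {a..b}"
        then have "a \<le> t" "t \<le> b" by auto
        then show "t \<in> T" using T_int aT bT unfolding is_interval_1 by blast
      qed
      moreover have "K \<subseteq> {a..b}"
      proof
        fix t assume t: "t \<in> K"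
        have "Inf K \<le> t" using cInf_lower[OF t bb(1)] .
        moreover have "t \<le> Sup K" using cSup_upper[OF t bb(2)] .
        ultimately show "t \<in> {a..b}" by (auto simp: a_def b_def)
      qed
      ultimately show ?thesis using that[of a b] by (auto simp: a_def b_def)
    qed
    define Bt where "Bt = max (- a) b"
    have sB: "\<bar>s\<bar> \<le> Bt" if "s \<in> {a..b}" for s using that by (auto simp: Bt_def)
    have Bt0: "Bt \<ge> 0" using ab by (simp add: Bt_def)
    obtain \<rho>0 where \<rho>0: "\<rho>0 > 0" "cball 0 \<rho>0 \<subseteq> W" using W_open W0 open_contains_cball by blast
    define Q where "Q = {a..b} \<times> cball (0::(real^'n) \<times> (real^'n)) \<rho>0"
    have QTW: "Q \<subseteq> T \<times> W" using ab \<rho>0 by (auto simp: Q_def)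
    have cQ: "compact Q" by (simp add: Q_def compact_Times)
    obtain M where M0: "M \<ge> 0"
      and Mb0: "\<forall>i\<in>Basis \<times> Basis. \<forall>q\<in>Q. \<bar>iter_pd [fst i, snd i] Sf q\<bar> \<le> M"
    proof -
      have "\<exists>M\<ge>0. \<forall>i\<in>Basis \<times> Basis. \<forall>q\<in>Q. \<bar>(\<lambda>i q. iter_pd [fst i, snd i] Sf q) i q\<bar> \<le> M"
      proof (rule finite_bound)
        show "finite ((Basis :: (real \<times> (real^'n) \<times> (real^'n)) set) \<times> Basis)" by simp
      next
        fix i :: "(real \<times> (real^'n) \<times> (real^'n)) \<times> (real \<times> (real^'n) \<times> (real^'n))"
        assume i: "i \<in> Basis \<times> Basis"
        have "continuous_on (T \<times> W) (iter_pd [fst i, snd i] Sf)"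
          by (rule smooth_on_cont[OF Ssm]) (use i in auto)
        then show "\<exists>M. \<forall>q\<in>Q. \<bar>iter_pd [fst i, snd i] Sf q\<bar> \<le> M"
          by (rule cont_bound_compact[OF _ cQ QTW])
      qed
      then show ?thesis using that by auto
    qed
    have Mb: "\<bar>iter_pd [bb, e] Sf q\<bar> \<le> M" if "bb \<in> Basis" "e \<in> Basis" "q \<in> Q" for bb e q
      using Mb0 that by force
    define Y where "Y s z = (\<chi> i. iter_pd [(0, 0, axis i 1)] Sf (s, z))" for s z
    have YS: "pgrad (\<lambda>\<eta>. S s x \<eta>) \<xi> = Y s (x, \<xi>)" if "s \<in> T" "(x, \<xi>) \<in> W" for s x \<xi>
      unfolding Y_def Sf_def by (rule S_partials(1)[OF S_smooth T_open W_open that])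
    define DD where "DD = real DIM(real \<times> (real^'n) \<times> (real^'n))"
    define Ay where "Ay = real CARD('n) * (DD * M)"
    have Ay0: "Ay \<ge> 0" using M0 by (simp add: Ay_def DD_def)
    have Ylip: "norm (Y s z - Y s 0) \<le> Ay * norm z" if s: "s \<in> {a..b}" and z: "z \<in> cball 0 \<rho>0" for s z
    proof -
      have comp: "\<bar>(Y s z - Y s 0) $ i\<bar> \<le> DD * M * norm z" for i
      proof -
        have sT: "s \<in> T" using s ab by auto
        have "\<bar>iter_pd [(0, 0, axis i 1)] Sf (s, z) - iter_pd [(0, 0, axis i 1)] Sf (s, 0)\<bar> \<le> DD * M * norm z"
          unfolding DD_def
        proof (rule S_grad_lip[OF Ssm T_open W_open sT \<rho>0(2) basis_S_snd _ z])
          fix bb :: "real \<times> (real^'n) \<times> (real^'n)" and zz assume "bb \<in> Basis" "zz \<in> cball (0::(real^'n) \<times> (real^'n)) \<rho>0"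
          then show "\<bar>iter_pd [bb, (0, 0, axis i 1)] Sf (s, zz)\<bar> \<le> M"
            using Mb[OF _ basis_S_snd] s by (simp add: Q_def)
        qed
        then show ?thesis by (simp add: Y_def)
      qed
      have "norm (Y s z - Y s 0) \<le> (\<Sum>i\<in>UNIV. \<bar>(Y s z - Y s 0) $ i\<bar>)" by (rule norm_le_l1_cart)
      also have "\<dots> \<le> (\<Sum>i\<in>(UNIV::'n set). DD * M * norm z)" by (rule sum_mono) (rule comp)
      also have "\<dots> = Ay * norm z" by (simp add: Ay_def)
      finally show ?thesis .
    qed
    have Ycont: "continuous_on {a..b} (\<lambda>s. Y s 0)"
      unfolding Y_def
    proof (intro continuous_on_vec_lambda)
      fix i :: 'n
      have "continuous_on (T \<times> W) (iter_pd [(0, 0, axis i 1)] Sf)"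
        by (rule smooth_on_cont[OF Ssm]) (simp add: basis_S_snd)
      moreover have "continuous_on {a..b} (\<lambda>s. (s, 0::(real^'n) \<times> (real^'n)))"
        by (intro continuous_intros)
      moreover have "(\<lambda>s. (s, 0::(real^'n) \<times> (real^'n))) ` {a..b} \<subseteq> T \<times> W" using ab W0 by auto
      ultimately show "continuous_on {a..b} (\<lambda>s. iter_pd [(0, 0, axis i 1)] Sf (s, 0))"
        by (rule continuous_on_compose2)
    qed
    have Y00: "Y 0 0 = 0"
    proof -
      have W0': "(0::real^'n, 0::real^'n) \<in> W" using W0 by (simp add: zero_prod_def)
      define U where "U = (\<lambda>\<eta>::real^'n. (0::real^'n, \<eta>)) -` W"
      have opn: "open U" unfolding U_def
        by (rule continuous_open_vimage[OF W_open]) (intro continuous_intros)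
      have U0: "0 \<in> U" using W0' by (simp add: U_def)
      have "((\<lambda>\<eta>::real^'n. 0::real) has_derivative (\<lambda>_. 0)) (at 0)" by simp
      then have "((\<lambda>\<eta>. S 0 0 \<eta>) has_derivative (\<lambda>_. 0)) (at 0)"
        by (rule has_derivative_transform_within_open[OF _ opn U0]) (use init in \<open>simp add: U_def\<close>)
      then have "frechet_derivative (\<lambda>\<eta>. S 0 0 \<eta>) (at 0) = (\<lambda>_. 0)" using frechet_derivative_at by metis
      then have "pgrad (\<lambda>\<eta>. S 0 0 \<eta>) 0 = 0" by (simp add: pgrad_def vec_eq_iff)
      moreover have "pgrad (\<lambda>\<eta>. S 0 0 \<eta>) 0 = Y 0 (0, 0)" using YS[OF T0 W0'] .
      ultimately show ?thesis by (simp add: zero_prod_def)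
    qed
    define E where "E = exp (C2 * Bt)"
    have E1: "E \<ge> 1" using C2 Bt0 by (simp add: E_def)
    define Kd where "Kd = C2 * Bt * E^2"
    have Kd0: "Kd \<ge> 0" using C2 Bt0 by (simp add: Kd_def)
    define \<delta> where "\<delta> = min (\<rho>1 / (2 * E)) (1 / (Kd + 1))"
    have \<delta>0: "\<delta> > 0" using \<rho>1 E1 Kd0 by (simp add: \<delta>_def)
    have dich: "Y s 0 = 0" if s: "s \<in> {a..b}" and small: "norm (Y s 0) < \<delta>" for s
    proof (rule ccontr)
      assume ne: "Y s 0 \<noteq> 0"
      define n where "n = norm (Y s 0)"
      have n0: "n > 0" using ne by (simp add: n_def)
      have sT: "s \<in> T" using s ab by auto
      have W0': "(0::real^'n, 0::real^'n) \<in> W" using W0 by (simp add: zero_prod_def)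
      have g: "(s, (pgrad (\<lambda>\<eta>. S s 0 \<eta>) 0, 0)) \<in> \<Omega> \<and>
               \<Phi> s (pgrad (\<lambda>\<eta>. S s 0 \<eta>) 0, 0) = (0, pgrad (\<lambda>y. S s y 0) 0)"
        using gen sT W0' by blast
      have YS0: "pgrad (\<lambda>\<eta>. S s 0 \<eta>) 0 = Y s 0" using YS[OF sT W0'] by (simp add: zero_prod_def)
      define w0 where "w0 = (Y s 0, 0::real^'n)"
      have inO: "(s, w0) \<in> \<Omega>" and Phieq: "\<Phi> s w0 = (0, pgrad (\<lambda>y. S s y 0) 0)"
        using g unfolding YS0 w0_def by auto
      have nw0: "norm w0 = n" by (simp add: w0_def n_def norm_Pair)
      have nE: "n * E \<le> \<rho>1 / 2"
      proof -
        have "n < \<rho>1 / (2 * E)" using small by (simp add: n_def \<delta>_def)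
        then have "n * E < \<rho>1 / (2 * E) * E" using E1 by (intro mult_strict_right_mono) auto
        then show ?thesis using E1 by (simp add: field_simps)
      qed
      have init': "norm w0 * exp (C2 * Bt) < \<rho>1" using nE \<rho>1 nw0 by (simp add: E_def)
      have fi: "norm (\<Phi> s w0 - w0) \<le> C2 * (exp (C2 * Bt) * norm w0) ^ (k - 1) * \<bar>s\<bar>"
        by (rule flow_increment[OF flow Hb \<rho>1(2) C2 k2 inO sB[OF s] init'])
      have "n \<le> norm (\<Phi> s w0 - w0)"
      proof -
        have "\<Phi> s w0 - w0 = (- Y s 0, pgrad (\<lambda>y. S s y 0) 0)" using Phieq by (simp add: w0_def)
        then show ?thesis using norm_fst_le[of "- Y s 0" "pgrad (\<lambda>y. S s y 0) 0"] by (simp add: n_def)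
      qed
      also have "\<dots> \<le> C2 * (E * n) ^ (k - 1) * \<bar>s\<bar>"
        using fi nw0 by (simp add: E_def)
      also have "\<dots> \<le> C2 * (E * n) ^ (k - 1) * Bt"
        using sB[OF s] C2 n0 E1 by (intro mult_left_mono) auto
      also have "\<dots> \<le> C2 * (E * n) ^ 2 * Bt"
      proof -
        have "(E * n) ^ (k - 1) \<le> (E * n) ^ 2"
          using nE \<rho>1 n0 E1 k3 by (intro power_decreasing) (auto simp: mult.commute)
        then show ?thesis using C2 Bt0 by (intro mult_right_mono mult_left_mono) auto
      qed
      also have "\<dots> = Kd * n * n" by (simp add: Kd_def power2_eq_square algebra_simps)
      finally have le: "n \<le> Kd * n * n" .
      have "n < 1 / (Kd + 1)" using small by (simp add: n_def \<delta>_def)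
      then have "n * (Kd + 1) < 1" using Kd0 by (simp add: field_simps)
      then have "Kd * n < 1" using n0 by (simp add: algebra_simps)
      then have "Kd * n * n < 1 * n" using n0 by (intro mult_strict_right_mono) auto
      then have "Kd * n * n < n" by simp
      then show False using le by simp
    qed
    have Ycn: "continuous_on {a..b} (\<lambda>s. norm (Y s 0))" using Ycont by (intro continuous_intros)
    have aZ: "Y s 0 = 0" if s: "s \<in> {a..b}" for s
    proof (rule ccontr)
      assume ne: "Y s 0 \<noteq> 0"
      then have ge: "norm (Y s 0) \<ge> \<delta>" using dich s by force
      have seg: "closed_segment 0 s \<subseteq> {a..b}" using s ab by (auto simp: closed_segment_eq_real_ivl)
      have "\<delta> / 2 \<in> closed_segment (norm (Y 0 0)) (norm (Y s 0))"
        using Y00 ge \<delta>0 by (simp add: closed_segment_eq_real_ivl)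
      then obtain s' where s': "s' \<in> closed_segment 0 s" "norm (Y s' 0) = \<delta> / 2"
        using IVT'_closed_segment_real[of "\<delta> / 2" "\<lambda>s. norm (Y s 0)" 0 s] continuous_on_subset[OF Ycn seg]
        by blast
      have "Y s' 0 = 0" using dich[of s'] s' seg \<delta>0 by auto
      then show False using s' \<delta>0 by simp
    qed
    have Ybd: "norm (Y s z) \<le> Ay * norm z" if "s \<in> {a..b}" "z \<in> cball 0 \<rho>0" for s z
      using Ylip[OF that] aZ[OF that(1)] by simp
    define A where "A = Ay + 1"
    have A1: "A \<ge> 1" using Ay0 by (simp add: A_def)
    define K3 where "K3 = C2 * (E * A) ^ (k - 1)"
    have K30: "K3 \<ge> 0" using C2 E1 A1 by (simp add: K3_def)
    define DE where "DE = real DIM((real^'n) \<times> (real^'n))"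
    define K4 where "K4 = DE * (C1 * 2 ^ (k - 1)) * K3"
    have K40: "K4 \<ge> 0" using C1 K30 by (simp add: K4_def DE_def)
    define r where "r = min (min \<rho>0 1) (min (\<rho>1 / (2 * (A * E + 1))) (1 / (K3 * Bt + 1)))"
    have AE0: "A * E + 1 > 0" using A1 E1 by (simp add: add_pos_nonneg)
    have KB0: "K3 * Bt + 1 > 0"
    proof -
      have "K3 * Bt \<ge> 0" using K30 Bt0 by simp
      then show ?thesis by linarith
    qed
    have r0: "r > 0" using \<rho>0 \<rho>1 AE0 KB0 by (simp add: r_def)
    have r\<rho>0: "r \<le> \<rho>0" and r1: "r \<le> 1" by (simp_all add: r_def)
    have rAE: "A * E * r \<le> \<rho>1 / 2" and r2: "2 * r \<le> \<rho>1"
    proof -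
      have "r \<le> \<rho>1 / (2 * (A * E + 1))" by (simp add: r_def)
      then have "(A * E + 1) * r \<le> \<rho>1 / 2" using AE0 by (simp add: field_simps)
      moreover have "A * E * r \<ge> 0" using A1 E1 r0 by simp
      moreover have "(A * E + 1) * r = A * E * r + r" by (simp add: algebra_simps)
      ultimately show "A * E * r \<le> \<rho>1 / 2" "2 * r \<le> \<rho>1" using r0 by linarith+
    qed
    have rK3: "K3 * Bt * r \<le> 1"
    proof -
      have "r \<le> 1 / (K3 * Bt + 1)" by (simp add: r_def)
      then have "(K3 * Bt + 1) * r \<le> 1" using KB0
        by (simp add: field_simps)
      then show ?thesis using r0 by (simp add: algebra_simps)
    qed
    define G where "G t z = (if t = 0 then 0 else - (S t (fst z) (snd z) - fst z \<bullet> snd z + t * P z) / t ^ 2)" for t z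
    have main: "\<bar>S t x \<xi> - x \<bullet> \<xi> + t * P (x, \<xi>)\<bar> \<le> K4 * t ^ 2 * norm (x, \<xi>) ^ (k + 1)"
      if t: "t \<in> K" and z: "norm (x, \<xi>) < r" for t x \<xi>
    proof -
      define nz where "nz = norm (x, \<xi>)"
      have nz: "nz < r" "nz \<ge> 0" using z by (simp_all add: nz_def)
      have zc: "(x, \<xi>) \<in> cball 0 \<rho>0" using nz r\<rho>0 by (simp add: nz_def)
      have zW: "(x, \<xi>) \<in> W" using zc \<rho>0 by auto
      have tab: "t \<in> {a..b}" using t ab by auto
      have seg: "closed_segment 0 t \<subseteq> {a..b}" using tab ab by (auto simp: closed_segment_eq_real_ivl)
      define F where "F s = S s x \<xi> - x \<bullet> \<xi> + s * P (x, \<xi>)" for s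
      have F0: "F 0 = 0" using init zW by (simp add: F_def)
      have Fd: "(F has_real_derivative (P (x, \<xi>) - p0 x (pgrad (\<lambda>y. S s y \<xi>) x))) (at s within closed_segment 0 t)"
        if s: "s \<in> closed_segment 0 t" for s
      proof -
        have sT: "s \<in> T" using s seg ab by auto
        have d: "((\<lambda>\<tau>. S \<tau> x \<xi>) has_real_derivative iter_pd [(1, 0)] Sf (s, x, \<xi>)) (at s)"
          unfolding Sf_def by (rule S_partials(2)[OF S_smooth T_open W_open sT zW])
        have "deriv (\<lambda>\<tau>. S \<tau> x \<xi>) s = iter_pd [(1, 0)] Sf (s, x, \<xi>)" by (rule DERIV_imp_deriv[OF d])
        then have hj: "iter_pd [(1, 0)] Sf (s, x, \<xi>) = - p0 x (pgrad (\<lambda>y. S s y \<xi>) x)"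
          using HJ sT zW by force
        have "(F has_real_derivative (iter_pd [(1, 0)] Sf (s, x, \<xi>) - 0 + 1 * P (x, \<xi>))) (at s)"
          unfolding F_def[abs_def]
          by (intro DERIV_add DERIV_diff d DERIV_const DERIV_cmult_right DERIV_ident)
        then show ?thesis using hj by (simp add: has_field_derivative_at_within)
      qed
      have Fb: "\<bar>P (x, \<xi>) - p0 x (pgrad (\<lambda>y. S s y \<xi>) x)\<bar> \<le> K4 * nz ^ (2 * k - 2) * \<bar>t\<bar>"
        if s: "s \<in> closed_segment 0 t" for s
      proof -
        have sab: "s \<in> {a..b}" using s seg by auto
        have sT: "s \<in> T" using sab ab by auto
        have st: "\<bar>s\<bar> \<le> \<bar>t\<bar>" using s by (auto simp: closed_segment_eq_real_ivl split: if_splits)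
        define y where "y = Y s (x, \<xi>)"
        define \<eta> where "\<eta> = pgrad (\<lambda>y. S s y \<xi>) x"
        define w0 where "w0 = (y, \<xi>)"
        have g: "(s, (pgrad (\<lambda>\<eta>. S s x \<eta>) \<xi>, \<xi>)) \<in> \<Omega> \<and>
                 \<Phi> s (pgrad (\<lambda>\<eta>. S s x \<eta>) \<xi>, \<xi>) = (x, pgrad (\<lambda>y. S s y \<xi>) x)"
          using gen sT zW by blast
        have inO: "(s, w0) \<in> \<Omega>" and Phieq: "\<Phi> s w0 = (x, \<eta>)"
          using g unfolding YS[OF sT zW] w0_def y_def \<eta>_def by auto
        have ny: "norm y \<le> Ay * nz" using Ybd[OF sab zc] by (simp add: y_def nz_def)
        have nw0: "norm w0 \<le> A * nz"
        proof -
          have "norm w0 \<le> norm y + norm \<xi>" unfolding w0_def by (rule norm_Pair_le)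
          also have "norm \<xi> \<le> nz" using norm_snd_le[of \<xi> x] by (simp add: nz_def)
          then have "norm y + norm \<xi> \<le> Ay * nz + nz" using ny by linarith
          finally show ?thesis by (simp add: A_def algebra_simps)
        qed
        have init': "norm w0 * exp (C2 * Bt) < \<rho>1"
        proof -
          have "norm w0 * E \<le> A * nz * E" using nw0 E1 by (intro mult_right_mono) auto
          also have "\<dots> \<le> A * E * r" using nz A1 E1 by (simp add: mult.commute mult.left_commute mult_left_mono less_imp_le)
          also have "\<dots> \<le> \<rho>1 / 2" by (rule rAE)
          also have "\<dots> < \<rho>1" using \<rho>1 by simp
          finally show ?thesis by (simp add: E_def)
        qed
        have fi: "norm (\<Phi> s w0 - w0) \<le> C2 * (exp (C2 * Bt) * norm w0) ^ (k - 1) * \<bar>s\<bar>"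
          by (rule flow_increment[OF flow Hb \<rho>1(2) C2 k2 inO sB[OF sab] init'])
        have ed: "norm (\<eta> - \<xi>) \<le> K3 * nz ^ (k - 1) * \<bar>s\<bar>"
        proof -
          have "norm (\<eta> - \<xi>) \<le> norm (\<Phi> s w0 - w0)"
            using norm_snd_le[of "\<eta> - \<xi>" "x - y"] Phieq by (simp add: w0_def)
          also have "\<dots> \<le> C2 * (E * norm w0) ^ (k - 1) * \<bar>s\<bar>" using fi by (simp add: E_def)
          also have "\<dots> \<le> C2 * (E * (A * nz)) ^ (k - 1) * \<bar>s\<bar>"
            using nw0 C2 E1 by (intro mult_right_mono mult_left_mono power_mono) auto
          also have "\<dots> = K3 * nz ^ (k - 1) * \<bar>s\<bar>" by (simp add: K3_def power_mult_distrib mult.assoc)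
          finally show ?thesis .
        qed
        have ed2: "norm (\<eta> - \<xi>) \<le> nz"
        proof -
          have p1: "nz ^ (k - 1) = nz ^ (k - 2) * nz"
          proof -
            have "k - 1 = Suc (k - 2)" using k3 by simp
            then show ?thesis by (simp add: mult.commute)
          qed
          have p2: "nz ^ (k - 2) \<le> r"
          proof -
            have "nz ^ (k - 2) \<le> nz ^ 1" using nz r1 k3 by (intro power_decreasing) auto
            then show ?thesis using nz by simp
          qed
          have c0: "K3 * nz ^ (k - 1) \<ge> 0" using K30 nz by simp
          have "norm (\<eta> - \<xi>) \<le> K3 * nz ^ (k - 1) * \<bar>s\<bar>" by (rule ed)
          also have "\<dots> \<le> K3 * nz ^ (k - 1) * Bt" using sB[OF sab] c0 by (rule mult_left_mono)
          finally have "norm (\<eta> - \<xi>) \<le> K3 * nz ^ (k - 1) * Bt" .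
          also have "\<dots> = K3 * Bt * nz ^ (k - 2) * nz" using p1 by (simp add: algebra_simps)
          also have "\<dots> \<le> K3 * Bt * r * nz" using p2 K30 Bt0 nz
            by (intro mult_right_mono mult_left_mono) (auto simp: mult_nonneg_nonneg)
          also have "\<dots> \<le> 1 * nz" using rK3 nz by (intro mult_right_mono) auto
          finally show ?thesis by simp
        qed
        have n1: "norm (x, \<xi>) \<le> 2 * nz" using nz by (simp add: nz_def)
        have n2: "norm (x, \<eta>) \<le> 2 * nz"
        proof -
          have "(x, \<eta>) = (x, \<xi>) + (0, \<eta> - \<xi>)" by simp
          then have "norm (x, \<eta>) \<le> norm (x, \<xi>) + norm (0::real^'n, \<eta> - \<xi>)" by (metis norm_triangle_ineq)
          also have "norm (0::real^'n, \<eta> - \<xi>) = norm (\<eta> - \<xi>)" by (simp add: norm_Pair)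
          finally show ?thesis using ed2 by (simp add: nz_def)
        qed
        have R2: "2 * nz \<le> \<rho>1" using nz r2 by linarith
        have "\<bar>P (x, \<xi>) - P (x, \<eta>)\<bar> \<le> DE * (C1 * (2 * nz) ^ (k - 1)) * norm ((x, \<xi>) - (x, \<eta>))"
          unfolding DE_def by (rule P_diff_bound[OF Psm gP C1 R2 n1 n2])
        also have "norm ((x, \<xi>) - (x, \<eta>)) = norm (\<eta> - \<xi>)"
          by (simp add: norm_Pair norm_minus_commute)
        also have "DE * (C1 * (2 * nz) ^ (k - 1)) * norm (\<eta> - \<xi>) \<le> DE * (C1 * (2 * nz) ^ (k - 1)) * (K3 * nz ^ (k - 1) * \<bar>t\<bar>)"
        proof (rule mult_left_mono)
          have c0: "K3 * nz ^ (k - 1) \<ge> 0" using K30 nz by simp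
          have "norm (\<eta> - \<xi>) \<le> K3 * nz ^ (k - 1) * \<bar>s\<bar>" by (rule ed)
          also have "\<dots> \<le> K3 * nz ^ (k - 1) * \<bar>t\<bar>" using st c0 by (rule mult_left_mono)
          finally show "norm (\<eta> - \<xi>) \<le> K3 * nz ^ (k - 1) * \<bar>t\<bar>" .
          show "0 \<le> DE * (C1 * (2 * nz) ^ (k - 1))" using C1 nz by (simp add: DE_def)
        qed
        also have "\<dots> = K4 * nz ^ (2 * k - 2) * \<bar>t\<bar>"
        proof -
          have "2 * k - 2 = (k - 1) + (k - 1)" using k3 by simp
          then have "nz ^ (2 * k - 2) = nz ^ (k - 1) * nz ^ (k - 1)"
            by (simp only: power_add)
          then show ?thesis by (simp add: K4_def power_mult_distrib algebra_simps)
        qed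
        finally show ?thesis by (simp add: Pxe \<eta>_def)
      qed
      have "norm (F t - F 0) \<le> (K4 * nz ^ (2 * k - 2) * \<bar>t\<bar>) * norm (t - 0)"
        by (rule field_differentiable_bound[OF convex_closed_segment Fd]) (use Fb in auto)
      then have "\<bar>F t\<bar> \<le> K4 * t ^ 2 * nz ^ (2 * k - 2)" using F0 by (simp add: power2_eq_square algebra_simps)
      also have "\<dots> \<le> K4 * t ^ 2 * nz ^ (k + 1)"
        using nz r1 k3 K40 by (intro mult_left_mono power_decreasing) auto
      finally show ?thesis by (simp add: F_def nz_def)
    qed
    have fin: "\<forall>t\<in>K. \<forall>x \<xi>. norm (x, \<xi>) < r \<longrightarrow>
             S t x \<xi> - x \<bullet> \<xi> + t * Ec = - t * (pp k (x, \<xi>) + (P (x, \<xi>) - Ec - pp k (x, \<xi>)) + t * G t (x, \<xi>)) \<and>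
             \<bar>G t (x, \<xi>)\<bar> \<le> K4 * norm (x, \<xi>) ^ (k + 1)"
    proof (intro ballI allI impI conjI)
      fix t and x \<xi> :: "real^'n" assume t: "t \<in> K" and z: "norm (x, \<xi>) < r"
      have zW: "(x, \<xi>) \<in> W" using z r\<rho>0 \<rho>0 by auto
      show "S t x \<xi> - x \<bullet> \<xi> + t * Ec = - t * (pp k (x, \<xi>) + (P (x, \<xi>) - Ec - pp k (x, \<xi>)) + t * G t (x, \<xi>))"
      proof (cases "t = 0")
        case True then show ?thesis using init zW by (simp add: G_def)
      next
        case False
        then show ?thesis by (simp add: G_def field_simps power2_eq_square)
      qed
      show "\<bar>G t (x, \<xi>)\<bar> \<le> K4 * norm (x, \<xi>) ^ (k + 1)"
      proof (cases "t = 0")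
        case True then show ?thesis using K40 by (simp add: G_def)
      next
        case False
        have "\<bar>G t (x, \<xi>)\<bar> = \<bar>S t x \<xi> - x \<bullet> \<xi> + t * P (x, \<xi>)\<bar> / t ^ 2"
          using False by (simp add: G_def abs_minus_commute)
        also have "\<dots> \<le> K4 * t ^ 2 * norm (x, \<xi>) ^ (k + 1) / t ^ 2"
          by (intro divide_right_mono main[OF t z]) simp
        also have "\<dots> = K4 * norm (x, \<xi>) ^ (k + 1)" using False by simp
        finally show ?thesis .
      qed
    qed
    show "\<exists>G. \<exists>r>0. \<exists>C. \<forall>t\<in>K. \<forall>x \<xi>. norm (x, \<xi>) < r \<longrightarrow>
             S t x \<xi> - x \<bullet> \<xi> + t * Ec = - t * (pp k (x, \<xi>) + (P (x, \<xi>) - Ec - pp k (x, \<xi>)) + t * G t (x, \<xi>)) \<and>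
             \<bar>G t (x, \<xi>)\<bar> \<le> C * norm (x, \<xi>) ^ (k + 1)"
      using r0 fin by blast
  qed
qed

end
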